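(* Assume the hypotheses of the convergence theorem for SREDA: (H1), (H2), (H3), $\lambda_{T,k}=0$ for all $k$ and $\lambda_{t,k}\to0$ as $k\to\infty$ for $t<T$. Fix $t\in\{2,\ldots,T\}$ and a node $n\in\mathrm{Nodes}(t-1)$, and let $\mathcal{S}_n=\{k\ge1: n_{t-1}^k=n\}$ be the set of iterations whose sampled scenario passes through $n$. If almost surely $\lim_{k\to+\infty,\,k\in\mathcal{S}_n}\big(\mathcal{Q}_t(x_n^k)-\mathcal{Q}_t^k(x_n^k)\big)=0$, then almost surely $\lim_{k\to+\infty,\,k\notin\mathcal{S}_n}\big(\mathcal{Q}_t(x_n^k)-\mathcal{Q}_t^k(x_n^k)\big)=0$.
   Context: Stages $t=1,\ldots,T$; $x_0\in\mathbb{R}^n$ given, $\mathcal{X}_0:=\{x_0\}$. Random data process $(\xi_t)$: $\xi_1$ deterministic; (H1): $(\xi_t)$ is interstage independent and for $t=2,\ldots,T$, $\xi_t$ is a random vector in $\mathbb{R}^K$ with finite support $\Theta_t=\{\xi_{t,1},\ldots,\xi_{t,M}\}$; the components of $\xi_t$ include the entries of $(b_t,A_t,B_t)$. $X_t(x_{t-1},\xi_t)=\{x_t\in\mathcal{X}_t: g_t(x_{t-1},x_t,\xi_t)\le0,\ A_tx_t+B_tx_{t-1}=b_t\}$. $\mathcal{Q}_{T+1}\equiv0$; $\mathfrak{Q}_t(x_{t-1},\xi_t)=\inf\{f_t(x_{t-1},x_t,\xi_t)+\mathcal{Q}_{t+1}(x_t): x_t\in X_t(x_{t-1},\xi_t)\}$;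 $\mathcal{Q}_t(x_{t-1})=\mathbb{E}[\mathfrak{Q}_t(x_{t-1},\xi_t)]$, $t=2,\ldots,T$. $\mathcal{X}^\varepsilon:=\mathcal{X}+\varepsilon\mathbb{B}_n$. (H2), for $t=1,\ldots,T$: 1) $\mathcal{X}_t$ nonempty convex compact; 2) $f_t(x_{t-1},x_t,\cdot)$ measurable and each $f_t(\cdot,\cdot,\xi_{t,j})$ proper convex lsc; 3) each component of $g_t(\cdot,\cdot,\xi_{t,j})$ convex lsc; 4) there is $\varepsilon>0$ such that for each $j$, $\mathcal{X}_{t-1}^\varepsilon\times\mathcal{X}_t\subset\mathrm{dom}\,f_t(\cdot,\cdot,\xi_{t,j})$ and $X_t(x_{t-1},\xi_{t,j})\ne\emptyset$ for all $x_{t-1}\in\mathcal{X}_{t-1}^\varepsilon$; 5) if $t\ge2$, for each $j$ there is $(\bar y,\bar x)\in(\mathcal{X}_{t-1}\times\mathrm{ri}(\mathcal{X}_t))\cap\mathrm{ri}(\{g_t(\cdot,\cdot,\xi_{t,j})\le0\})$ with $\bar x\in X_t(\bar y,\xi_{t,j})$. Scenario tree: root $n_0$ (stage 0) with one child $n_1$ (stage 1, $\xi_{n_1}=\xi_1$); each stage-$(t-1)$ node has $M$ children $m$, one per $\xi_{t,j}$, with $\xi_m=\xi_{t,j}$, $p_m=\mathbb{P}(\xi_t=\xi_{t,j})$; $\mathrm{Nodes}(t)$, $C(n)$ as usual. SREDA: initial $\mathcal{Q}_t^0\le\mathcal{Q}_t$, $\mathcal{Q}_{T+1}^k\equiv0$;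 nonnegative $\lambda_{t,k}$ with $\lambda_{t,1}=\lambda_{T,k}=0$; prox-centers $x_t^{P,k}\in\mathcal{X}_t$. Iteration $k\ge1$: Forward pass: $x_{n_0}^k=x_0$; for $t=1,\ldots,T$, all nodes $n$ of stage $t-1$ and $m\in C(n)$, $x_m^k$ solves $\min\{f_t(x_n^k,x_m,\xi_m)+\mathcal{Q}_{t+1}^{k-1}(x_m)+\lambda_{t,k}\|x_m-x_t^{P,k}\|^2:x_m\in X_t(x_n^k,\xi_m)\}$. Backward pass: select nodes $(n_1^k,\ldots,n_T^k)$, $n_1^k=n_1$, $n_t^k\in C(n_{t-1}^k)$, corresponding to a sample $(\xi_1^k,\ldots,\xi_T^k)$; for $t=T,\ldots,2$ with $n=n_{t-1}^k$, for $m\in C(n)$ compute $\underline{\mathfrak{Q}}_t^k(x_n^k,\xi_m)=\inf\{f_t(x_n^k,x_m,\xi_m)+\mathcal{Q}_{t+1}^k(x_m):x_m\in X_t(x_n^k,\xi_m)\}$ and a subgradient $\pi_m^k$ of $\underline{\mathfrak{Q}}_t^k(\cdot,\xi_m)$ at $x_n^k$; $\theta_t^k=\sum_mp_m\underline{\mathfrak{Q}}_t^k(x_n^k,\xi_m)$, $\beta_t^k=\sum_mp_m\pi_m^k$, $\mathcal{C}_t^k(y)=\theta_t^k+\langle\beta_t^k,y-x_n^k\rangle$, $\mathcal{Q}_t^k=\max\{\mathcal{Q}_t^{k-1},\mathcal{C}_t^k\}$. (H3): for every $j$, $t=2,\ldots,T$, $k\ge1$, $\mathbb{P}(\xi_t^k=\xi_{t,j})=\mathbb{P}(\xi_t=\xi_{t,j})>0$,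 and $\xi_t^k$ is independent of $\sigma(\xi_2^1,\ldots,\xi_T^1,\ldots,\xi_2^{k-1},\ldots,\xi_T^{k-1},\xi_2^k,\ldots,\xi_{t-1}^k)$. *)

theory Defs
  imports "HOL-Analysis.Analysis" "HOL-Probability.Probability"
begin

definition fatten :: "'a::real_normed_vector set \<Rightarrow> real \<Rightarrow> 'a set" where
  "fatten X e = (\<Union>y\<in>X. cball y e)"

definition edom :: "('a \<Rightarrow> ereal) \<Rightarrow> 'a set" where
  "edom F = {z. F z < \<infinity>}"

definition proper_ef :: "('a \<Rightarrow> ereal) \<Rightarrow> bool" where
  "proper_ef F \<longleftrightarrow> (\<forall>z. F z \<noteq> -\<infinity>) \<and> (\<exists>z. F z \<noteq> \<infinity>)"

definition convex_ef :: "('a::real_vector \<Rightarrow> ereal) \<Rightarrow> bool" where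
  "convex_ef F \<longleftrightarrow> (\<forall>y z u. 0 < u \<and> u < 1 \<longrightarrow>
      F (u *\<^sub>R y + (1 - u) *\<^sub>R z) \<le> ereal u * F y + ereal (1 - u) * F z)"

definition lsc_ef :: "('a::topological_space \<Rightarrow> ereal) \<Rightarrow> bool" where
  "lsc_ef F \<longleftrightarrow> (\<forall>c::real. closed {z. F z \<le> ereal c})"

definition is_subgrad :: "('a::real_inner \<Rightarrow> ereal) \<Rightarrow> 'a \<Rightarrow> 'a \<Rightarrow> bool" where
  "is_subgrad F y \<pi> \<longleftrightarrow> \<bar>F y\<bar> \<noteq> \<infinity> \<and> (\<forall>z. F y + ereal (\<pi> \<bullet> (z - y)) \<le> F z)"

definition feas :: "(nat \<Rightarrow> 'a::real_inner set) \<Rightarrow> (nat \<Rightarrow> nat \<Rightarrow> 'a \<Rightarrow> 'a \<Rightarrow> 'xi \<Rightarrow> real)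
    \<Rightarrow> (nat \<Rightarrow> nat) \<Rightarrow> (nat \<Rightarrow> nat \<Rightarrow> 'xi \<Rightarrow> 'a) \<Rightarrow> (nat \<Rightarrow> nat \<Rightarrow> 'xi \<Rightarrow> 'a)
    \<Rightarrow> (nat \<Rightarrow> nat \<Rightarrow> 'xi \<Rightarrow> real) \<Rightarrow> (nat \<Rightarrow> nat) \<Rightarrow> nat \<Rightarrow> 'a \<Rightarrow> 'xi \<Rightarrow> 'a set" where
  "feas Xs g ng Ar Br bv nr t xprev \<xi> =
     {z \<in> Xs t. (\<forall>i<ng t. g t i xprev z \<xi> \<le> 0) \<and>
               (\<forall>i<nr t. Ar t i \<xi> \<bullet> z + Br t i \<xi> \<bullet> xprev = bv t i \<xi>)}"

definition Qinf :: "(nat \<Rightarrow> 'a \<Rightarrow> 'a \<Rightarrow> 'xi \<Rightarrow> ereal) \<Rightarrow> (nat \<Rightarrow> 'a \<Rightarrow> 'xi \<Rightarrow> 'a set)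
    \<Rightarrow> ('a \<Rightarrow> ereal) \<Rightarrow> nat \<Rightarrow> 'a \<Rightarrow> 'xi \<Rightarrow> ereal" where
  "Qinf f Xf F t y \<xi> = (INF z\<in>Xf t y \<xi>. f t y z \<xi> + F z)"

(* Scenario tree: the stage-s node (s >= 1) is encoded as the list of length s-1 of the
   indices j of the realizations xi_{2,j}, ..., xi_{s,j} along the path from n_1. *)
definition tree_nodes :: "nat \<Rightarrow> nat \<Rightarrow> nat list set" where
  "tree_nodes M s = {m. length m = s - 1 \<and> set m \<subseteq> {..<M}}"

definition node_xi :: "'xi \<Rightarrow> (nat \<Rightarrow> nat \<Rightarrow> 'xi) \<Rightarrow> nat list \<Rightarrow> 'xi" where
  "node_xi xi1 xi m = (if m = [] then xi1 else xi (length m + 1) (last m))"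

definition Theta :: "'xi \<Rightarrow> (nat \<Rightarrow> nat \<Rightarrow> 'xi) \<Rightarrow> nat \<Rightarrow> nat \<Rightarrow> 'xi set" where
  "Theta xi1 xi M t = (if t = 1 then {xi1} else xi t ` {..<M})"

(* n_s^k: node of stage s selected in the backward pass of iteration k;
   J k r \<omega> is the index j with xi_r^k = xi_{r,j} *)
definition sampled_node :: "(nat \<Rightarrow> nat \<Rightarrow> 'w \<Rightarrow> nat) \<Rightarrow> nat \<Rightarrow> nat \<Rightarrow> 'w \<Rightarrow> nat list" where
  "sampled_node J k s \<omega> = map (\<lambda>r. J k r \<omega>) [2..<Suc s]"

definition samples_agree :: "(nat \<Rightarrow> nat \<Rightarrow> 'w \<Rightarrow> nat) \<Rightarrow> nat \<Rightarrow> nat \<Rightarrow> 'w \<Rightarrow> 'w \<Rightarrow> bool" where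
  "samples_agree J T k \<omega> \<omega>' \<longleftrightarrow> (\<forall>k'\<in>{1..<k}. \<forall>s\<in>{2..T}. J k' s \<omega> = J k' s \<omega>')"

end

theory Submission
  imports Defs
begin


lemma aff_le_iff:
  fixes X a :: ereal
  assumes u: "0 < u"
  shows "X \<le> ereal u * a + ereal c \<longleftrightarrow> (X - ereal c) * ereal (1/u) \<le> a"
  using u by (cases X; cases a) (auto simp: field_simps)

lemma aff_inf:
  fixes X :: ereal and g :: "'b \<Rightarrow> ereal"
  assumes u: "0 < u" and c: "c \<noteq> -\<infinity>" and h: "\<And>z. z \<in> S \<Longrightarrow> X \<le> ereal u * g z + c"
  shows "X \<le> ereal u * (INF z\<in>S. g z) + c"
proof (cases c)
  case (real c')
  have "(X - ereal c') * ereal (1/u) \<le> (INF z\<in>S. g z)"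
  proof (rule INF_greatest)
    fix z assume "z \<in> S"
    then have "X \<le> ereal u * g z + ereal c'" using h real by simp
    then show "(X - ereal c') * ereal (1/u) \<le> g z" by (subst (asm) aff_le_iff[OF u])
  qed
  then show ?thesis unfolding real by (subst aff_le_iff[OF u])
next
  case PInf then show ?thesis by simp
next
  case MInf then show ?thesis using c by simp
qed




lemma ereal_not_minf_mult: "0 < (u::real) \<Longrightarrow> a \<noteq> -\<infinity> \<Longrightarrow> ereal u * a \<noteq> -\<infinity>"
  by (cases a) auto

lemma ereal_comb_add:
  fixes a1 a2 b1 b2 :: ereal
  assumes "a1 \<noteq> -\<infinity>" "a2 \<noteq> -\<infinity>" "b1 \<noteq> -\<infinity>" "b2 \<noteq> -\<infinity>" "0 < u" "u < 1"
  shows "(ereal u * a1 + ereal (1-u) * a2) + (ereal u * b1 + ereal (1-u) * b2)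
        = ereal u * (a1 + b1) + ereal (1-u) * (a2 + b2)"
proof -
  have "ereal u * (a1 + b1) = ereal u * a1 + ereal u * b1"
    using assms by (intro ereal_distrib_left) auto
  moreover have "ereal (1-u) * (a2 + b2) = ereal (1-u) * a2 + ereal (1-u) * b2"
    using assms by (intro ereal_distrib_left) auto
  ultimately show ?thesis by (simp add: ac_simps)
qed

lemma convex_ef_add:
  assumes "convex_ef F" "convex_ef G" "\<And>y. F y \<noteq> -\<infinity>" "\<And>y. G y \<noteq> -\<infinity>"
  shows "convex_ef (\<lambda>y. F y + G y)"
  unfolding convex_ef_def
proof (intro allI impI)
  fix y z and u :: real assume u: "0 < u \<and> u < 1"
  have "F (u *\<^sub>R y + (1 - u) *\<^sub>R z) + G (u *\<^sub>R y + (1 - u) *\<^sub>R z)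
     \<le> (ereal u * F y + ereal (1-u) * F z) + (ereal u * G y + ereal (1-u) * G z)"
    using assms(1,2) u unfolding convex_ef_def by (intro add_mono) auto
  also have "\<dots> = ereal u * (F y + G y) + ereal (1 - u) * (F z + G z)"
    using assms u by (intro ereal_comb_add) auto
  finally show "F (u *\<^sub>R y + (1 - u) *\<^sub>R z) + G (u *\<^sub>R y + (1 - u) *\<^sub>R z)
     \<le> ereal u * (F y + G y) + ereal (1 - u) * (F z + G z)" .
qed

lemma convex_ef_cmult:
  assumes "convex_ef F" "\<And>y. F y \<noteq> -\<infinity>" "0 \<le> c"
  shows "convex_ef (\<lambda>y. ereal c * F y)"
  unfolding convex_ef_def
proof (intro allI impI)
  fix y z and u :: real assume u: "0 < u \<and> u < 1"
  have "ereal c * F (u *\<^sub>R y + (1 - u) *\<^sub>R z) \<le> ereal c * (ereal u * F y + ereal (1-u) * F z)"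
    using assms u unfolding convex_ef_def by (intro ereal_mult_left_mono) auto
  also have "\<dots> = ereal c * (ereal u * F y) + ereal c * (ereal (1-u) * F z)"
    using assms u by (intro ereal_distrib_left) (auto simp: ereal_not_minf_mult)
  also have "\<dots> = ereal u * (ereal c * F y) + ereal (1 - u) * (ereal c * F z)"
    by (simp add: ac_simps)
  finally show "ereal c * F (u *\<^sub>R y + (1 - u) *\<^sub>R z)
     \<le> ereal u * (ereal c * F y) + ereal (1 - u) * (ereal c * F z)" .
qed

lemma ereal_sum_not_minf: "(\<And>i. i \<in> I \<Longrightarrow> f i \<noteq> (-\<infinity>::ereal)) \<Longrightarrow> sum f I \<noteq> -\<infinity>"
proof (induction I rule: infinite_finite_induct)
  case (insert x F)
  then show ?case by (simp add: ereal_plus_eq_MInfty)  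
qed auto

lemma convex_ef_sum:
  assumes "finite I" "\<And>i. i \<in> I \<Longrightarrow> convex_ef (F i)" "\<And>i y. i \<in> I \<Longrightarrow> F i y \<noteq> -\<infinity>"
  shows "convex_ef (\<lambda>y. \<Sum>i\<in>I. F i y)"
  using assms
proof (induction I rule: finite_induct)
  case empty
  then show ?case by (simp add: convex_ef_def)
next
  case (insert x I)
  have "convex_ef (\<lambda>y. F x y + (\<Sum>i\<in>I. F i y))"
    using insert by (intro convex_ef_add ereal_sum_not_minf) auto
  then show ?case using insert by simp
qed

lemma marg_convex:
  fixes h :: "'a::real_vector \<Rightarrow> 'b::real_vector \<Rightarrow> ereal" and F :: "'b \<Rightarrow> ereal"
    and S :: "'a \<Rightarrow> 'b set"
  assumes ch: "convex_ef (\<lambda>(y,z). h y z)" and hm: "\<And>y z. h y z \<noteq> -\<infinity>"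
    and cF: "convex_ef F" and Fm: "\<And>z. F z \<noteq> -\<infinity>"
    and cS: "\<And>y1 y2 z1 z2 u. z1 \<in> S y1 \<Longrightarrow> z2 \<in> S y2 \<Longrightarrow> 0<u \<Longrightarrow> u<1 \<Longrightarrow>
               u *\<^sub>R z1 + (1-u) *\<^sub>R z2 \<in> S (u *\<^sub>R y1 + (1-u) *\<^sub>R y2)"
    and mm: "\<And>y. (INF z\<in>S y. h y z + F z) \<noteq> -\<infinity>"
  shows "convex_ef (\<lambda>y. INF z\<in>S y. h y z + F z)"
  unfolding convex_ef_def
proof (intro allI impI)
  fix y1 y2 :: 'a and u :: real assume u: "0 < u \<and> u < 1"
  define m where "m = (\<lambda>y. INF z\<in>S y. h y z + F z)"
  define y where "y = u *\<^sub>R y1 + (1-u) *\<^sub>R y2"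
  have key: "m y \<le> ereal u * (h y1 z1 + F z1) + ereal (1-u) * (h y2 z2 + F z2)"
    if z: "z1\<in>S y1" "z2\<in>S y2" for z1 z2
  proof -
    define z where "z = u *\<^sub>R z1 + (1-u) *\<^sub>R z2"
    have zS: "z \<in> S y" using cS[OF z] u unfolding z_def y_def by auto
    have "m y \<le> h y z + F z" unfolding m_def using zS by (rule INF_lower)
    also have "\<dots> \<le> (ereal u * h y1 z1 + ereal (1-u) * h y2 z2) + (ereal u * F z1 + ereal (1-u) * F z2)"
    proof (intro add_mono)
      have "u *\<^sub>R (y1,z1) + (1-u) *\<^sub>R (y2,z2) = (y, z)" by (simp add: y_def z_def)
      then show "h y z \<le> ereal u * h y1 z1 + ereal (1-u) * h y2 z2"
        using ch u unfolding convex_ef_def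
        by (metis (mono_tags, lifting) case_prod_conv)
      show "F z \<le> ereal u * F z1 + ereal (1-u) * F z2"
        using cF u unfolding convex_ef_def z_def by auto
    qed
    also have "\<dots> = ereal u * (h y1 z1 + F z1) + ereal (1-u) * (h y2 z2 + F z2)"
      using u hm Fm by (intro ereal_comb_add) auto
    finally show ?thesis .
  qed
  have step1: "m y \<le> ereal u * m y1 + ereal (1-u) * (h y2 z2 + F z2)" if z2: "z2 \<in> S y2" for z2
  proof -
    have "m y \<le> ereal u * (INF z\<in>S y1. h y1 z + F z) + ereal (1-u) * (h y2 z2 + F z2)"
      by (rule aff_inf) (use u hm Fm key[OF _ z2] ereal_not_minf_mult in \<open>auto simp: ereal_plus_eq_MInfty\<close>)
    then show ?thesis by (simp add: m_def)
  qed
  have "m y \<le> ereal (1-u) * (INF z\<in>S y2. h y2 z + F z) + ereal u * m y1"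
  proof (rule aff_inf)
    show "0 < 1 - u" using u by simp
    show "ereal u * m y1 \<noteq> -\<infinity>" using u mm unfolding m_def by (intro ereal_not_minf_mult) auto
    fix z assume "z \<in> S y2"
    then show "m y \<le> ereal (1 - u) * (h y2 z + F z) + ereal u * m y1"
      using step1 by (simp add: add.commute)
  qed
  then show "(INF z\<in>S (u *\<^sub>R y1 + (1 - u) *\<^sub>R y2). h (u *\<^sub>R y1 + (1 - u) *\<^sub>R y2) z + F z)
       \<le> ereal u * (INF z\<in>S y1. h y1 z + F z) + ereal (1 - u) * (INF z\<in>S y2. h y2 z + F z)"
    unfolding m_def y_def by (simp add: add.commute)
qed

lemma fatten_self: "0 \<le> e \<Longrightarrow> X \<subseteq> fatten X e"
  by (auto simp: fatten_def)

lemma ereal_sum_less_inf: "(\<And>i. i \<in> I \<Longrightarrow> f i < (\<infinity>::ereal)) \<Longrightarrow> sum f I < \<infinity>"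
proof (induction I rule: infinite_finite_induct)
  case (insert x F)
  then show ?case by (simp add: ereal_add_strict_mono2)
qed auto


lemma ereal_cmult_less_inf: "0 \<le> c \<Longrightarrow> a < \<infinity> \<Longrightarrow> ereal c * a < \<infinity>"
  by (cases a) auto


lemma mem_fatten: "y \<in> fatten X e \<longleftrightarrow> (\<exists>x\<in>X. dist x y \<le> e)"
  by (auto simp: fatten_def)

lemma fatten_trans: "y \<in> fatten X r \<Longrightarrow> dist y z \<le> d \<Longrightarrow> z \<in> fatten X (r + d)"
  unfolding mem_fatten by (meson dist_triangle order_trans add_mono)

lemma convex_fatten:
  fixes X :: "'a::real_normed_vector set"
  assumes "convex X" shows "convex (fatten X e)"
  unfolding convex_def
proof (intro ballI allI impI)
  fix y1 y2 and u v :: real assume y: "y1 \<in> fatten X e" "y2 \<in> fatten X e" and uv0: "0 \<le> u" "0 \<le> v" "u + v = 1"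
  have uv: "0 \<le> u \<and> 0 \<le> v \<and> u + v = 1" using uv0 by simp
  obtain x1 where x1: "x1 \<in> X" "dist x1 y1 \<le> e" using y(1) by (auto simp: mem_fatten)
  obtain x2 where x2: "x2 \<in> X" "dist x2 y2 \<le> e" using y(2) by (auto simp: mem_fatten)
  have "u *\<^sub>R x1 + v *\<^sub>R x2 \<in> X" using assms x1 x2 uv by (auto intro: convexD)
  moreover have "dist (u *\<^sub>R x1 + v *\<^sub>R x2) (u *\<^sub>R y1 + v *\<^sub>R y2) \<le> e"
  proof -
    have "dist (u *\<^sub>R x1 + v *\<^sub>R x2) (u *\<^sub>R y1 + v *\<^sub>R y2) = norm (u *\<^sub>R (x1 - y1) + v *\<^sub>R (x2 - y2))"
      by (simp add: dist_norm algebra_simps)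
    also have "\<dots> \<le> norm (u *\<^sub>R (x1 - y1)) + norm (v *\<^sub>R (x2 - y2))" by (rule norm_triangle_ineq)
    also have "\<dots> = u * dist x1 y1 + v * dist x2 y2" using uv by (simp add: dist_norm)
    also have "\<dots> \<le> u * e + v * e" using uv x1 x2 by (intro add_mono mult_left_mono) auto
    also have "\<dots> = (u + v) * e" by (simp add: algebra_simps)
    also have "\<dots> = e" using uv by simp
    finally show ?thesis .
  qed
  ultimately show "u *\<^sub>R y1 + v *\<^sub>R y2 \<in> fatten X e" by (auto simp: mem_fatten)
qed

lemma compact_fatten:
  fixes X :: "'a::euclidean_space set"
  assumes "compact X" shows "compact (fatten X e)"
proof -
  have eq: "fatten X e = {x + y |x y. x \<in> X \<and> y \<in> cball 0 e}"
  proof (intro set_eqI iffI)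
    fix z assume "z \<in> fatten X e"
    then obtain x where "x \<in> X" "dist x z \<le> e" by (auto simp: mem_fatten)
    then show "z \<in> {x + y |x y. x \<in> X \<and> y \<in> cball 0 e}"
      by (intro CollectI exI[of _ x] exI[of _ "z - x"]) (auto simp: dist_norm norm_minus_commute)
  next
    fix z assume "z \<in> {x + y |x y. x \<in> X \<and> y \<in> cball 0 e}"
    then obtain x y where "z = x + y" "x \<in> X" "norm y \<le> e" by auto
    then show "z \<in> fatten X e" by (auto simp: mem_fatten dist_norm intro!: bexI[of _ x])
  qed
  show ?thesis unfolding eq by (rule compact_sums[OF assms compact_cball])
qed

lemma convex_ef_real:
  assumes cF: "convex_ef F" and K: "convex K" and fin: "\<And>y. y \<in> K \<Longrightarrow> \<bar>F y\<bar> \<noteq> \<infinity>"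
  shows "convex_on K (\<lambda>y. real_of_ereal (F y))"
  unfolding convex_on_def
proof (intro conjI K ballI allI impI)
  fix x y and u v :: real assume xy: "x \<in> K" "y \<in> K" and uv0: "0 \<le> u" "0 \<le> v" "u + v = 1"
  have uv: "0 \<le> u \<and> 0 \<le> v \<and> u + v = 1" using uv0 by simp
  show "real_of_ereal (F (u *\<^sub>R x + v *\<^sub>R y)) \<le> u * real_of_ereal (F x) + v * real_of_ereal (F y)"
  proof (cases "u = 0 \<or> v = 0")
    case True then show ?thesis using uv by auto
  next
    case False
    then have u: "0 < u" "u < 1" and v: "v = 1 - u" using uv by auto
    obtain a where a: "F x = ereal a" using fin[OF xy(1)] by (cases "F x") auto
    obtain b where b: "F y = ereal b" using fin[OF xy(2)] by (cases "F y") auto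
    have w: "u *\<^sub>R x + v *\<^sub>R y \<in> K" using K xy uv by (auto intro: convexD)
    obtain c where c: "F (u *\<^sub>R x + v *\<^sub>R y) = ereal c" using fin[OF w] by (cases "F (u *\<^sub>R x + v *\<^sub>R y)") auto
    have "F (u *\<^sub>R x + v *\<^sub>R y) \<le> ereal u * F x + ereal (1 - u) * F y"
      using cF u unfolding convex_ef_def v by blast
    then show ?thesis using a b c v by simp
  qed
qed


locale S6 =
  fixes T M :: nat
    and x0 :: "'a::euclidean_space"
    and Xs :: "nat \<Rightarrow> 'a set"
    and xi1 :: "'xi::euclidean_space"
    and xi :: "nat \<Rightarrow> nat \<Rightarrow> 'xi"
    and p :: "nat \<Rightarrow> nat \<Rightarrow> real"
    and f :: "nat \<Rightarrow> 'a \<Rightarrow> 'a \<Rightarrow> 'xi \<Rightarrow> ereal"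
    and g :: "nat \<Rightarrow> nat \<Rightarrow> 'a \<Rightarrow> 'a \<Rightarrow> 'xi \<Rightarrow> real"
    and ng nr :: "nat \<Rightarrow> nat"
    and Ar Br :: "nat \<Rightarrow> nat \<Rightarrow> 'xi \<Rightarrow> 'a"
    and bv :: "nat \<Rightarrow> nat \<Rightarrow> 'xi \<Rightarrow> real"
    and Xf :: "nat \<Rightarrow> 'a \<Rightarrow> 'xi \<Rightarrow> 'a set"
    and Q Q0 :: "nat \<Rightarrow> 'a \<Rightarrow> ereal"
    and lam :: "nat \<Rightarrow> nat \<Rightarrow> real"
    and PS :: "'w measure"
    and J :: "nat \<Rightarrow> nat \<Rightarrow> 'w \<Rightarrow> nat"
    and xP :: "nat \<Rightarrow> nat \<Rightarrow> 'w \<Rightarrow> 'a"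
    and x :: "nat \<Rightarrow> nat list \<Rightarrow> 'w \<Rightarrow> 'a"
    and Qk :: "nat \<Rightarrow> nat \<Rightarrow> 'w \<Rightarrow> 'a \<Rightarrow> ereal"
    and pi :: "nat \<Rightarrow> nat \<Rightarrow> nat \<Rightarrow> 'w \<Rightarrow> 'a"
    and t :: nat and n :: "nat list"
  assumes p_pos: "\<forall>s\<in>{2..T}. \<forall>j<M. p s j > 0"
    and p_sum: "\<forall>s\<in>{2..T}. (\<Sum>j<M. p s j) = 1"
    and xi_distinct: "\<forall>s\<in>{2..T}. inj_on (xi s) {..<M}"
  \<comment> \<open>the entries of (b_t, A_t, B_t) are components of xi_t\<close>
    and A_comp: "\<forall>s\<in>{1..T}. \<forall>i<nr s. \<forall>e\<in>Basis. \<exists>l\<in>Basis. \<forall>\<xi>. Ar s i \<xi> \<bullet> e = \<xi> \<bullet> l"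
    and B_comp: "\<forall>s\<in>{1..T}. \<forall>i<nr s. \<forall>e\<in>Basis. \<exists>l\<in>Basis. \<forall>\<xi>. Br s i \<xi> \<bullet> e = \<xi> \<bullet> l"
    and b_comp: "\<forall>s\<in>{1..T}. \<forall>i<nr s. \<exists>l\<in>Basis. \<forall>\<xi>. bv s i \<xi> = \<xi> \<bullet> l"
    and Xf_def: "Xf = feas Xs g ng Ar Br bv nr"
    and X0: "Xs 0 = {x0}"
    and H2_1: "\<forall>s\<in>{1..T}. Xs s \<noteq> {} \<and> convex (Xs s) \<and> compact (Xs s)"
    and H2_2a: "\<forall>s\<in>{1..T}. \<forall>y z. (\<lambda>\<xi>. f s y z \<xi>) \<in> borel_measurable borel"
    and H2_2b: "\<forall>s\<in>{1..T}. \<forall>\<xi>\<in>Theta xi1 xi M s.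
          proper_ef (\<lambda>(y, z). f s y z \<xi>) \<and> convex_ef (\<lambda>(y, z). f s y z \<xi>)
          \<and> lsc_ef (\<lambda>(y, z). f s y z \<xi>)"
    and H2_3: "\<forall>s\<in>{1..T}. \<forall>\<xi>\<in>Theta xi1 xi M s. \<forall>i<ng s.
          convex_on UNIV (\<lambda>(y, z). g s i y z \<xi>) \<and> lsc_ef (\<lambda>(y, z). ereal (g s i y z \<xi>))"
    and H2_4: "\<forall>s\<in>{1..T}. \<exists>\<epsilon>>0. \<forall>\<xi>\<in>Theta xi1 xi M s.
          fatten (Xs (s - 1)) \<epsilon> \<times> Xs s \<subseteq> edom (\<lambda>(y, z). f s y z \<xi>)
          \<and> (\<forall>y\<in>fatten (Xs (s - 1)) \<epsilon>. Xf s y \<xi> \<noteq> {})"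
    and H2_5: "\<forall>s\<in>{2..T}. \<forall>\<xi>\<in>Theta xi1 xi M s. \<exists>yb xb.
          (yb, xb) \<in> (Xs (s - 1) \<times> rel_interior (Xs s))
                      \<inter> rel_interior {(y, z). \<forall>i<ng s. g s i y z \<xi> \<le> 0}
          \<and> xb \<in> Xf s yb \<xi>"
    and Q_last: "\<forall>y. Q (Suc T) y = 0"
    and Q_rec: "\<forall>s\<in>{2..T}. \<forall>y. Q s y = (\<Sum>j<M. ereal (p s j) * Qinf f Xf (Q (Suc s)) s y (xi s j))"
    and lam_nonneg: "\<forall>s k. lam s k \<ge> 0"
    and lam_first: "\<forall>s. lam s 1 = 0"
    and lam_last: "\<forall>k. lam T k = 0"
    and lam_lim: "\<forall>s\<in>{1..<T}. (lam s \<longlonglongrightarrow> 0)"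
    and prox_in: "\<forall>s\<in>{1..T}. \<forall>k\<ge>1. \<forall>\<omega>. xP s k \<omega> \<in> Xs s"
    and Q_init: "\<forall>s\<in>{2..T}. \<forall>\<omega>. Qk 0 s \<omega> = Q0 s"
    and Q0_le: "\<forall>s\<in>{2..T}. \<forall>y. Q0 s y \<le> Q s y"
    and Qk_last: "\<forall>k \<omega>. Qk k (Suc T) \<omega> = (\<lambda>_. 0)"
    and PS: "prob_space PS"
    and J_meas: "\<forall>k\<ge>1. \<forall>s\<in>{2..T}. J k s \<in> measurable PS (count_space UNIV)"
    and J_dist: "\<forall>k\<ge>1. \<forall>s\<in>{2..T}. \<forall>j<M. measure PS {\<omega> \<in> space PS. J k s \<omega> = j} = p s j"
    and J_indep: "\<forall>k\<ge>1. \<forall>s\<in>{2..T}. prob_space.indep_set PS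
          (sigma_sets (space PS) {J k s -` {j} \<inter> space PS | j. True})
          (sigma_sets (space PS) {J k' s' -` {j} \<inter> space PS | j k' s'.
              (1 \<le> k' \<and> k' < k \<and> s' \<in> {2..T}) \<or> (k' = k \<and> s' \<in> {2..<s})})"
    and forward: "\<forall>k\<ge>1. \<forall>\<omega>. \<forall>m. length m < T \<and> set m \<subseteq> {..<M} \<longrightarrow>
          (let s = length m + 1; \<xi> = node_xi xi1 xi m;
               xpar = (if m = [] then x0 else x k (butlast m) \<omega>)
           in is_arg_min
                (\<lambda>z. f s xpar z \<xi> + Qk (k - 1) (Suc s) \<omega> z
                      + ereal (lam s k * (norm (z - xP s k \<omega>))\<^sup>2))
                (\<lambda>z. z \<in> Xf s xpar \<xi>) (x k m \<omega>))"
    and backward: "\<forall>k\<ge>1. \<forall>\<omega>. \<forall>s\<in>{2..T}.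
          (let xn = x k (sampled_node J k (s - 1) \<omega>) \<omega>
           in (\<forall>j<M. is_subgrad (\<lambda>z. Qinf f Xf (Qk k (Suc s) \<omega>) s z (xi s j)) xn (pi k s j \<omega>))
              \<and> Qk k s \<omega> = (\<lambda>y. max (Qk (k - 1) s \<omega> y)
                   ((\<Sum>j<M. ereal (p s j) * Qinf f Xf (Qk k (Suc s) \<omega>) s xn (xi s j))
                    + ereal ((\<Sum>j<M. p s j *\<^sub>R pi k s j \<omega>) \<bullet> (y - xn)))))"
  \<comment> \<open>the algorithm's choices are non-anticipative (deterministic rules applied to past samples)\<close>
    and x_adapted: "\<forall>k\<ge>1. \<forall>\<omega> \<omega>'. samples_agree J T k \<omega> \<omega>' \<longrightarrow>
          (\<forall>m. x k m \<omega> = x k m \<omega>') \<and> (\<forall>s. xP s k \<omega> = xP s k \<omega>')"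
    and pi_adapted: "\<forall>k\<ge>1. \<forall>\<omega> \<omega>'. samples_agree J T (Suc k) \<omega> \<omega>' \<longrightarrow>
          (\<forall>s j. pi k s j \<omega> = pi k s j \<omega>')"
    and t_range: "t \<in> {2..T}"
    and n_node: "n \<in> tree_nodes M (t - 1)"
    and lim_in: "AE \<omega> in PS. ((\<lambda>k. Q t (x k n \<omega>) - Qk k t \<omega> (x k n \<omega>)) \<longlongrightarrow> 0)
                   (sequentially \<sqinter> principal {k. 1 \<le> k \<and> sampled_node J k (t - 1) \<omega> = n})"

begin

sublocale P: prob_space PS by (rule PS)

lemma t2: "2 \<le> t" and tT: "t \<le> T" using t_range by auto

definition "xn k s \<omega> = x k (sampled_node J k (s - 1) \<omega>) \<omega>"
definition "bet k s \<omega> = (\<Sum>j<M. p s j *\<^sub>R pi k s j \<omega>)"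
definition "th k s \<omega> = (\<Sum>j<M. ereal (p s j) * Qinf f Xf (Qk k (Suc s) \<omega>) s (xn k s \<omega>) (xi s j))"
definition "cutf k s \<omega> y = th k s \<omega> + ereal (bet k s \<omega> \<bullet> (y - xn k s \<omega>))"

lemma bw_all: assumes "1 \<le> k" "s \<in> {2..T}"
  shows "(\<forall>j<M. is_subgrad (\<lambda>z. Qinf f Xf (Qk k (Suc s) \<omega>) s z (xi s j)) (xn k s \<omega>) (pi k s j \<omega>))
     \<and> Qk k s \<omega> = (\<lambda>y. max (Qk (k-1) s \<omega> y) (cutf k s \<omega> y))"
proof -
  have "\<forall>k\<ge>1. \<forall>\<omega>. \<forall>s\<in>{2..T}. (\<forall>j<M. is_subgrad (\<lambda>z. Qinf f Xf (Qk k (Suc s) \<omega>) s z (xi s j)) (xn k s \<omega>) (pi k s j \<omega>))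
     \<and> Qk k s \<omega> = (\<lambda>y. max (Qk (k-1) s \<omega> y) (cutf k s \<omega> y))"
    using backward unfolding Let_def xn_def cutf_def th_def bet_def .
  then show ?thesis using assms by blast
qed

lemma bw_sub: "1 \<le> k \<Longrightarrow> s \<in> {2..T} \<Longrightarrow> j < M \<Longrightarrow>
   is_subgrad (\<lambda>z. Qinf f Xf (Qk k (Suc s) \<omega>) s z (xi s j)) (xn k s \<omega>) (pi k s j \<omega>)"
  using bw_all by blast

lemma bw_eq: "1 \<le> k \<Longrightarrow> s \<in> {2..T} \<Longrightarrow> Qk k s \<omega> y = max (Qk (k-1) s \<omega> y) (cutf k s \<omega> y)"
  using bw_all by metis

lemma xi_Theta: "s \<in> {2..T} \<Longrightarrow> j < M \<Longrightarrow> xi s j \<in> Theta xi1 xi M s"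
  by (auto simp: Theta_def)

lemma Xf_sub: "Xf s y \<xi> \<subseteq> Xs s"
  by (auto simp: Xf_def feas_def)

lemma Qk_mono1: "s \<in> {2..Suc T} \<Longrightarrow> Qk k s \<omega> y \<le> Qk (Suc k) s \<omega> y"
proof (cases "s = Suc T")
  case True then show ?thesis using Qk_last by simp
next
  case False
  assume "s \<in> {2..Suc T}"
  then have "s \<in> {2..T}" using False by auto
  then show ?thesis using bw_eq[of "Suc k" s \<omega> y] by simp
qed

lemma Qk_mono: "s \<in> {2..Suc T} \<Longrightarrow> k1 \<le> k2 \<Longrightarrow> Qk k1 s \<omega> y \<le> Qk k2 s \<omega> y"
  using lift_Suc_mono_le[of "\<lambda>k. Qk k s \<omega> y"] Qk_mono1 by blast

lemma cutf_le_Qinf: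
  assumes s: "s \<in> {2..T}" and k: "1 \<le> k"
  shows "cutf k s \<omega> y \<le> (\<Sum>j<M. ereal (p s j) * Qinf f Xf (Qk k (Suc s) \<omega>) s y (xi s j))"
proof -
  define F where "F j z = Qinf f Xf (Qk k (Suc s) \<omega>) s z (xi s j)" for j z
  define v where "v j = real_of_ereal (F j (xn k s \<omega>))" for j
  have sg: "is_subgrad (F j) (xn k s \<omega>) (pi k s j \<omega>)" if "j < M" for j
    using bw_sub[OF k s that] unfolding F_def .
  have Fv: "F j (xn k s \<omega>) = ereal (v j)" if "j < M" for j
    using sg[OF that] unfolding is_subgrad_def v_def by (cases "F j (xn k s \<omega>)") auto
  have p0: "0 \<le> p s j" if "j < M" for j
  proof -
    have "0 < p s j" using p_pos s that by blast
    then show ?thesis by simp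
  qed
  have "cutf k s \<omega> y = ereal (\<Sum>j<M. p s j * (v j + pi k s j \<omega> \<bullet> (y - xn k s \<omega>)))"
  proof -
    have "th k s \<omega> = (\<Sum>j<M. ereal (p s j * v j))"
      unfolding th_def F_def[symmetric] by (rule sum.cong) (simp_all add: Fv)
    also have "\<dots> = ereal (\<Sum>j<M. p s j * v j)" by (rule sum_ereal)
    finally have 1: "th k s \<omega> = ereal (\<Sum>j<M. p s j * v j)" .
    have 2: "bet k s \<omega> \<bullet> (y - xn k s \<omega>) = (\<Sum>j<M. p s j * (pi k s j \<omega> \<bullet> (y - xn k s \<omega>)))"
      unfolding bet_def by (simp add: inner_sum_left)
    have 3: "(\<Sum>j<M. p s j * v j) + (\<Sum>j<M. p s j * (pi k s j \<omega> \<bullet> (y - xn k s \<omega>)))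
         = (\<Sum>j<M. p s j * (v j + pi k s j \<omega> \<bullet> (y - xn k s \<omega>)))"
      by (simp add: distrib_left sum.distrib)
    show ?thesis unfolding cutf_def 1 2 3[symmetric] by simp
  qed
  also have "\<dots> = (\<Sum>j<M. ereal (p s j) * ereal (v j + pi k s j \<omega> \<bullet> (y - xn k s \<omega>)))"
    unfolding sum_ereal[symmetric] by simp
  also have "\<dots> \<le> (\<Sum>j<M. ereal (p s j) * F j y)"
  proof (rule sum_mono)
    fix j assume "j \<in> {..<M}"
    then have j: "j < M" by simp
    have "ereal (v j + pi k s j \<omega> \<bullet> (y - xn k s \<omega>)) \<le> F j y"
      using sg[OF j] Fv[OF j] unfolding is_subgrad_def by auto
    then show "ereal (p s j) * ereal (v j + pi k s j \<omega> \<bullet> (y - xn k s \<omega>)) \<le> ereal (p s j) * F j y"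
      using p0[OF j] by (intro ereal_mult_left_mono) auto
  qed
  finally show ?thesis unfolding F_def .
qed

lemma Qinf_mono: "(\<And>z. F z \<le> G z) \<Longrightarrow> Qinf f Xf F s y \<xi> \<le> Qinf f Xf G s y \<xi>"
  unfolding Qinf_def by (intro INF_mono) (auto intro: add_mono)

lemma valid: "s \<in> {2..Suc T} \<Longrightarrow> Qk k s \<omega> y \<le> Q s y"
proof (induction k arbitrary: s y)
  case 0
  then show ?case
    using Q_init Q0_le Qk_last Q_last by (cases "s = Suc T") auto
next
  case (Suc k)
  note IHk = Suc.IH
  have main: "\<forall>y. Qk (Suc k) (Suc T - i) \<omega> y \<le> Q (Suc T - i) y" if "i \<le> T - 1" for i
    using that
  proof (induction i)
    case 0 then show ?case using Qk_last Q_last by simp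
  next
    case (Suc i)
    define s where "s = Suc T - Suc i"
    have s: "s \<in> {2..T}" and ss: "Suc s = Suc T - i" using Suc.prems unfolding s_def by auto
    show ?case unfolding s_def[symmetric]
    proof
      fix y
      have "cutf (Suc k) s \<omega> y \<le> Q s y"
      proof -
        have "cutf (Suc k) s \<omega> y \<le> (\<Sum>j<M. ereal (p s j) * Qinf f Xf (Qk (Suc k) (Suc s) \<omega>) s y (xi s j))"
          using cutf_le_Qinf[OF s] by simp
        also have "\<dots> \<le> (\<Sum>j<M. ereal (p s j) * Qinf f Xf (Q (Suc s)) s y (xi s j))"
          using Suc.IH Suc.prems p_pos s unfolding ss[symmetric]
          by (intro sum_mono ereal_mult_left_mono Qinf_mono) (auto simp: less_imp_le)
        also have "\<dots> = Q s y" using Q_rec s by simp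
        finally show ?thesis .
      qed
      moreover have "Qk k s \<omega> y \<le> Q s y" using IHk s by simp
      ultimately show "Qk (Suc k) s \<omega> y \<le> Q s y"
        using bw_eq[of "Suc k" s \<omega> y] s by simp
    qed
  qed
  have "Suc T - (Suc T - s) = s" "Suc T - s \<le> T - 1" using Suc.prems t_range by auto
  then show ?case using main[of "Suc T - s"] by metis
qed


lemma Qinf_lower_aff:
  assumes s: "s \<in> {2..T}" and j: "j < M"
  shows "\<exists>a b. \<forall>y. ereal (a + b \<bullet> y) \<le> Qinf f Xf (Q (Suc s)) s y (xi s j)"
proof -
  define F where "F z = Qinf f Xf (Qk 1 (Suc s) undefined) s z (xi s j)" for z
  have sg: "is_subgrad F (xn 1 s undefined) (pi 1 s j undefined)"
    using bw_sub[OF _ s j] unfolding F_def by simp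
  then obtain v where v: "F (xn 1 s undefined) = ereal v" unfolding is_subgrad_def
    by (cases "F (xn 1 s undefined)") auto
  have "ereal (v - pi 1 s j undefined \<bullet> xn 1 s undefined + pi 1 s j undefined \<bullet> y)
        \<le> Qinf f Xf (Q (Suc s)) s y (xi s j)" for y
  proof -
    have "ereal (v - pi 1 s j undefined \<bullet> xn 1 s undefined + pi 1 s j undefined \<bullet> y)
       = F (xn 1 s undefined) + ereal (pi 1 s j undefined \<bullet> (y - xn 1 s undefined))"
      unfolding v by (simp add: inner_diff_right)
    also have "\<dots> \<le> F y" using sg unfolding is_subgrad_def by blast
    also have "\<dots> \<le> Qinf f Xf (Q (Suc s)) s y (xi s j)"
      unfolding F_def by (rule Qinf_mono) (use valid s in auto)
    finally show ?thesis .
  qed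
  then show ?thesis by blast
qed

lemma Qinf_not_minf: assumes "s \<in> {2..T}" "j < M" shows "Qinf f Xf (Q (Suc s)) s y (xi s j) \<noteq> -\<infinity>"
proof -
  obtain a b where "\<forall>y. ereal (a + b \<bullet> y) \<le> Qinf f Xf (Q (Suc s)) s y (xi s j)"
    using Qinf_lower_aff[OF assms] by blast
  then have "ereal (a + b \<bullet> y) \<le> Qinf f Xf (Q (Suc s)) s y (xi s j)" by blast
  then show ?thesis by auto
qed

lemma p_gt0: "s \<in> {2..T} \<Longrightarrow> j < M \<Longrightarrow> 0 < p s j"
  using p_pos by blast

lemma p_ge0: "s \<in> {2..T} \<Longrightarrow> j < M \<Longrightarrow> 0 \<le> p s j"
  using p_gt0 less_imp_le by blast

lemma Q_not_minf: "s \<in> {2..Suc T} \<Longrightarrow> Q s y \<noteq> -\<infinity>"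
proof (cases "s = Suc T")
  case True then show ?thesis using Q_last by simp
next
  case False
  assume "s \<in> {2..Suc T}"
  then have s: "s \<in> {2..T}" using False by auto
  have "(\<Sum>j<M. ereal (p s j) * Qinf f Xf (Q (Suc s)) s y (xi s j)) \<noteq> -\<infinity>"
    using s by (intro ereal_sum_not_minf ereal_not_minf_mult p_gt0 Qinf_not_minf) auto
  then show ?thesis using Q_rec s by simp
qed

lemma Q_ub: "s \<in> {2..Suc T} \<Longrightarrow> \<exists>e>0. \<forall>y\<in>fatten (Xs (s-1)) e. Q s y < \<infinity>"
proof -
  have "\<exists>e>0. \<forall>y\<in>fatten (Xs (Suc T - i - 1)) e. Q (Suc T - i) y < \<infinity>" if "i \<le> T - 1" for i
    using that
  proof (induction i)
    case 0 then show ?case using Q_last by (intro exI[of _ 1]) auto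
  next
    case (Suc i)
    define s where "s = Suc T - Suc i"
    have s: "s \<in> {2..T}" and ss: "Suc s = Suc T - i" using Suc.prems unfolding s_def by auto
    obtain e' where e': "e' > 0" "\<forall>w\<in>fatten (Xs s) e'. Q (Suc s) w < \<infinity>"
      using Suc.IH Suc.prems unfolding ss[symmetric] by auto
    obtain \<epsilon> where \<epsilon>: "\<epsilon> > 0" "\<forall>\<xi>\<in>Theta xi1 xi M s.
          fatten (Xs (s - 1)) \<epsilon> \<times> Xs s \<subseteq> edom (\<lambda>(y, z). f s y z \<xi>)
          \<and> (\<forall>y\<in>fatten (Xs (s - 1)) \<epsilon>. Xf s y \<xi> \<noteq> {})"
      using H2_4 s by force
    have "\<forall>y\<in>fatten (Xs (s-1)) \<epsilon>. Q s y < \<infinity>"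
    proof
      fix y assume y: "y \<in> fatten (Xs (s-1)) \<epsilon>"
      have "Qinf f Xf (Q (Suc s)) s y (xi s j) < \<infinity>" if j: "j < M" for j
      proof -
        have \<xi>: "xi s j \<in> Theta xi1 xi M s" using xi_Theta[OF s j] .
        obtain w where w: "w \<in> Xf s y (xi s j)" using \<epsilon>(2) \<xi> y by blast
        have wX: "w \<in> Xs s" using w Xf_sub by blast
        have "(y, w) \<in> edom (\<lambda>(y, z). f s y z (xi s j))" using \<epsilon>(2) \<xi> y wX by blast
        then have fw: "f s y w (xi s j) < \<infinity>" unfolding edom_def by simp
        have Qw: "Q (Suc s) w < \<infinity>" using e' wX fatten_self[of e' "Xs s"] by auto
        have "Qinf f Xf (Q (Suc s)) s y (xi s j) \<le> f s y w (xi s j) + Q (Suc s) w"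
          unfolding Qinf_def using w by (rule INF_lower)
        also have "\<dots> < \<infinity>" using fw Qw by (simp add: ereal_add_strict_mono2)
        finally show ?thesis .
      qed
      then have "(\<Sum>j<M. ereal (p s j) * Qinf f Xf (Q (Suc s)) s y (xi s j)) < \<infinity>"
        using s by (intro ereal_sum_less_inf ereal_cmult_less_inf p_ge0) auto
      then show "Q s y < \<infinity>" using Q_rec s by simp
    qed
    then show ?case using \<epsilon>(1) unfolding s_def by blast
  qed
  note main = this
  assume s: "s \<in> {2..Suc T}"
  have "Suc T - s \<le> T - 1" using s by auto
  from main[OF this] have "\<exists>e>0. \<forall>y\<in>fatten (Xs (Suc T - (Suc T - s) - 1)) e. Q (Suc T - (Suc T - s)) y < \<infinity>" .
  moreover have "Suc T - (Suc T - s) = s" using s by auto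
  ultimately show ?thesis by simp
qed

lemma feas_conv:
  assumes s: "s \<in> {1..T}" and \<xi>: "\<xi> \<in> Theta xi1 xi M s"
    and z1: "z1 \<in> Xf s y1 \<xi>" and z2: "z2 \<in> Xf s y2 \<xi>" and u: "0 < u" "u < 1"
  shows "u *\<^sub>R z1 + (1-u) *\<^sub>R z2 \<in> Xf s (u *\<^sub>R y1 + (1-u) *\<^sub>R y2) \<xi>"
proof -
  have cX: "convex (Xs s)" using H2_1 s by blast
  have z1': "z1 \<in> Xs s" "\<forall>i<ng s. g s i y1 z1 \<xi> \<le> 0"
       "\<forall>i<nr s. Ar s i \<xi> \<bullet> z1 + Br s i \<xi> \<bullet> y1 = bv s i \<xi>"
    using z1 unfolding Xf_def feas_def by auto
  have z2': "z2 \<in> Xs s" "\<forall>i<ng s. g s i y2 z2 \<xi> \<le> 0"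
       "\<forall>i<nr s. Ar s i \<xi> \<bullet> z2 + Br s i \<xi> \<bullet> y2 = bv s i \<xi>"
    using z2 unfolding Xf_def feas_def by auto
  have "u *\<^sub>R z1 + (1-u) *\<^sub>R z2 \<in> Xs s"
    using u by (intro convexD[OF cX z1'(1) z2'(1)]) auto
  moreover have "g s i (u *\<^sub>R y1 + (1-u) *\<^sub>R y2) (u *\<^sub>R z1 + (1-u) *\<^sub>R z2) \<xi> \<le> 0" if i: "i < ng s" for i
  proof -
    have cg: "convex_on UNIV (\<lambda>(y, z). g s i y z \<xi>)" using H2_3 s \<xi> i by blast
    have "(\<lambda>(y, z). g s i y z \<xi>) ((1 - (1-u)) *\<^sub>R (y1, z1) + (1-u) *\<^sub>R (y2, z2))
        \<le> (1 - (1-u)) * (\<lambda>(y, z). g s i y z \<xi>) (y1, z1) + (1-u) * (\<lambda>(y, z). g s i y z \<xi>) (y2, z2)"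
      using u by (intro convex_onD[OF cg]) auto
    then have "g s i (u *\<^sub>R y1 + (1-u) *\<^sub>R y2) (u *\<^sub>R z1 + (1-u) *\<^sub>R z2) \<xi>
        \<le> u * g s i y1 z1 \<xi> + (1-u) * g s i y2 z2 \<xi>"
      by simp
    also have "\<dots> \<le> 0" using z1'(2) z2'(2) i u
      by (intro add_nonpos_nonpos mult_nonneg_nonpos) auto
    finally show ?thesis .
  qed
  moreover have "Ar s i \<xi> \<bullet> (u *\<^sub>R z1 + (1-u) *\<^sub>R z2) + Br s i \<xi> \<bullet> (u *\<^sub>R y1 + (1-u) *\<^sub>R y2) = bv s i \<xi>"
    if i: "i < nr s" for i
  proof -
    have "Ar s i \<xi> \<bullet> (u *\<^sub>R z1 + (1-u) *\<^sub>R z2) + Br s i \<xi> \<bullet> (u *\<^sub>R y1 + (1-u) *\<^sub>R y2)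
      = u * (Ar s i \<xi> \<bullet> z1 + Br s i \<xi> \<bullet> y1) + (1-u) * (Ar s i \<xi> \<bullet> z2 + Br s i \<xi> \<bullet> y2)"
      by (simp add: inner_add_right algebra_simps)
    also have "\<dots> = bv s i \<xi>" using z1'(3) z2'(3) i by (simp add: algebra_simps)
    finally show ?thesis .
  qed
  ultimately show ?thesis unfolding Xf_def feas_def by auto
qed

lemma Q_convex: "s \<in> {2..Suc T} \<Longrightarrow> convex_ef (Q s)"
proof -
  have "convex_ef (Q (Suc T - i))" if "i \<le> T - 1" for i
    using that
  proof (induction i)
    case 0 then show ?case using Q_last by (simp add: convex_ef_def)
  next
    case (Suc i)
    define s where "s = Suc T - Suc i"
    have s: "s \<in> {2..T}" and ss: "Suc s = Suc T - i" using Suc.prems unfolding s_def by auto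
    have cQ: "convex_ef (Q (Suc s))" using Suc.IH Suc.prems unfolding ss[symmetric] by auto
    have cQi: "convex_ef (\<lambda>y. Qinf f Xf (Q (Suc s)) s y (xi s j))" if j: "j < M" for j
    proof -
      have \<xi>: "xi s j \<in> Theta xi1 xi M s" using xi_Theta[OF s j] .
      have H: "proper_ef (\<lambda>(y, z). f s y z (xi s j)) \<and> convex_ef (\<lambda>(y, z). f s y z (xi s j))"
        using H2_2b s \<xi> by auto
      have "convex_ef (\<lambda>y. INF z\<in>Xf s y (xi s j). f s y z (xi s j) + Q (Suc s) z)"
      proof (rule marg_convex)
        show "convex_ef (\<lambda>(y, z). f s y z (xi s j))" using H by blast
        show "f s y z (xi s j) \<noteq> - \<infinity>" for y z
          using H unfolding proper_ef_def by (metis case_prod_conv)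
        show "convex_ef (Q (Suc s))" by (rule cQ)
        show "Q (Suc s) z \<noteq> - \<infinity>" for z using Q_not_minf s by auto
        show "u *\<^sub>R z1 + (1 - u) *\<^sub>R z2 \<in> Xf s (u *\<^sub>R y1 + (1 - u) *\<^sub>R y2) (xi s j)"
          if "z1 \<in> Xf s y1 (xi s j)" "z2 \<in> Xf s y2 (xi s j)" "0 < u" "u < 1" for z1 z2 y1 y2 u
          using feas_conv[OF _ \<xi> that] s by auto
        show "(INF z\<in>Xf s y (xi s j). f s y z (xi s j) + Q (Suc s) z) \<noteq> - \<infinity>" for y
          using Qinf_not_minf[OF s j] unfolding Qinf_def by blast
      qed
      then show ?thesis unfolding Qinf_def .
    qed
    have "convex_ef (\<lambda>y. \<Sum>j<M. ereal (p s j) * Qinf f Xf (Q (Suc s)) s y (xi s j))"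
    proof (rule convex_ef_sum)
      fix j assume j: "j \<in> {..<M}"
      show "convex_ef (\<lambda>y. ereal (p s j) * Qinf f Xf (Q (Suc s)) s y (xi s j))"
        using j s by (intro convex_ef_cmult cQi Qinf_not_minf less_imp_le p_gt0) auto
      show "ereal (p s j) * Qinf f Xf (Q (Suc s)) s y (xi s j) \<noteq> - \<infinity>" for y
        using j s by (intro ereal_not_minf_mult Qinf_not_minf p_gt0) auto
    qed simp
    moreover have "Q s = (\<lambda>y. \<Sum>j<M. ereal (p s j) * Qinf f Xf (Q (Suc s)) s y (xi s j))"
      using Q_rec s by auto
    ultimately show ?case unfolding s_def by simp
  qed
  note main = this
  assume s: "s \<in> {2..Suc T}"
  have "Suc T - s \<le> T - 1" using s by auto
  from main[OF this] have "convex_ef (Q (Suc T - (Suc T - s)))" .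
  moreover have "Suc T - (Suc T - s) = s" using s by auto
  ultimately show ?thesis by simp
qed


definition "good0 \<omega> \<longleftrightarrow> (\<forall>k\<ge>1. \<forall>r\<in>{2..T}. J k r \<omega> < M)"
definition "qt y = real_of_ereal (Q t y)"

lemma x_in:
  assumes k: "1 \<le> k" and len: "length m < T" and st: "set m \<subseteq> {..<M}"
  shows "x k m \<omega> \<in> Xs (length m + 1)"
proof -
  have "let s = length m + 1; \<xi> = node_xi xi1 xi m;
               xpar = (if m = [] then x0 else x k (butlast m) \<omega>)
           in is_arg_min
                (\<lambda>z. f s xpar z \<xi> + Qk (k - 1) (Suc s) \<omega> z
                      + ereal (lam s k * (norm (z - xP s k \<omega>))\<^sup>2))
                (\<lambda>z. z \<in> Xf s xpar \<xi>) (x k m \<omega>)"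
    using forward k len st by blast
  then have "\<exists>xpar \<xi>. x k m \<omega> \<in> Xf (length m + 1) xpar \<xi>"
    unfolding Let_def is_arg_min_def by blast
  then show ?thesis using Xf_sub by blast
qed

lemma sn_props: "good0 \<omega> \<Longrightarrow> 1 \<le> k \<Longrightarrow>
   length (sampled_node J k (t-1) \<omega>) = t - 2 \<and> set (sampled_node J k (t-1) \<omega>) \<subseteq> {..<M}"
  using t_range unfolding good0_def sampled_node_def by auto

lemma xn_in: "good0 \<omega> \<Longrightarrow> 1 \<le> k \<Longrightarrow> xn k t \<omega> \<in> Xs (t-1)"
proof -
  assume g: "good0 \<omega>" and k: "1 \<le> k"
  have "x k (sampled_node J k (t-1) \<omega>) \<omega> \<in> Xs (length (sampled_node J k (t-1) \<omega>) + 1)"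
    using sn_props[OF g k] t_range by (intro x_in k) auto
  moreover have "length (sampled_node J k (t-1) \<omega>) + 1 = t - 1" using sn_props[OF g k] t_range by auto
  ultimately show ?thesis unfolding xn_def by simp
qed

lemma xnode_in: "1 \<le> k \<Longrightarrow> x k n \<omega> \<in> Xs (t-1)"
proof -
  assume k: "1 \<le> k"
  have n: "length n = t - 2" "set n \<subseteq> {..<M}" using n_node unfolding tree_nodes_def by auto
  have "x k n \<omega> \<in> Xs (length n + 1)" using n t_range by (intro x_in k) auto
  moreover have "length n + 1 = t - 1" using n t_range by auto
  ultimately show ?thesis by simp
qed

lemma th_fin: assumes "1 \<le> k" "s \<in> {2..T}" shows "\<exists>r. th k s \<omega> = ereal r"
proof -
  define v where "v j = real_of_ereal (Qinf f Xf (Qk k (Suc s) \<omega>) s (xn k s \<omega>) (xi s j))" for j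
  have "Qinf f Xf (Qk k (Suc s) \<omega>) s (xn k s \<omega>) (xi s j) = ereal (v j)" if "j < M" for j
    using bw_sub[OF assms that, where \<omega>=\<omega>] unfolding is_subgrad_def v_def
    by (cases "Qinf f Xf (Qk k (Suc s) \<omega>) s (xn k s \<omega>) (xi s j)") auto
  then have "th k s \<omega> = (\<Sum>j<M. ereal (p s j * v j))" unfolding th_def by (intro sum.cong) auto
  also have "\<dots> = ereal (\<Sum>j<M. p s j * v j)" by (rule sum_ereal)
  finally show ?thesis by blast
qed

lemma Xt1: "Xs (t-1) \<noteq> {} \<and> convex (Xs (t-1)) \<and> compact (Xs (t-1))"
proof -
  have "t - 1 \<in> {1..T}" using t_range by auto
  then show ?thesis using H2_1 by blast
qed

lemma stage_t: "\<exists>e>0. \<exists>Ow. open Ow \<and> fatten (Xs (t-1)) e \<subseteq> Ow \<and> continuous_on Ow qt \<and>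
   (\<forall>y\<in>Ow. Q t y = ereal (qt y))"
proof -
  obtain e where e: "e > 0" "\<forall>y\<in>fatten (Xs (t-1)) e. Q t y < \<infinity>"
    using Q_ub[of t] t_range by auto
  define Ow where "Ow = interior (fatten (Xs (t-1)) e)"
  have cX: "convex (Xs (t-1))" using Xt1 by auto
  have cO: "convex Ow" unfolding Ow_def by (intro convex_interior convex_fatten cX)
  have fin: "\<bar>Q t y\<bar> \<noteq> \<infinity>" if "y \<in> Ow" for y
  proof -
    have "y \<in> fatten (Xs (t-1)) e" using that interior_subset unfolding Ow_def by blast
    then have "Q t y < \<infinity>" using e by blast
    moreover have "Q t y \<noteq> -\<infinity>" using Q_not_minf t_range by auto
    ultimately show ?thesis by auto
  qed
  have "convex_on Ow qt" unfolding qt_def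
    by (rule convex_ef_real[OF Q_convex cO fin]) (use t_range in auto)
  then have cont: "continuous_on Ow qt" by (intro convex_on_continuous) (auto simp: Ow_def)
  have sub: "fatten (Xs (t-1)) (e/2) \<subseteq> Ow"
  proof
    fix y assume y: "y \<in> fatten (Xs (t-1)) (e/2)"
    have "ball y (e/2) \<subseteq> fatten (Xs (t-1)) e"
    proof
      fix z assume "z \<in> ball y (e/2)"
      then have "z \<in> fatten (Xs (t-1)) (e/2 + e/2)" using fatten_trans[OF y, of z "e/2"] by auto
      then show "z \<in> fatten (Xs (t-1)) e" by simp
    qed
    then show "y \<in> Ow" unfolding Ow_def using e(1) by (intro interiorI[of "ball y (e/2)"]) auto
  qed
  have "\<forall>y\<in>Ow. Q t y = ereal (qt y)" using fin unfolding qt_def by (auto simp: ereal_real)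
  then show ?thesis using sub cont e(1) by (intro exI[of _ "e/2"]) (auto simp: Ow_def)
qed

lemma stage_t2: "\<exists>e U. e > 0 \<and> (\<forall>y\<in>fatten (Xs (t-1)) e. Q t y = ereal (qt y) \<and> qt y \<le> U)
   \<and> uniformly_continuous_on (Xs (t-1)) qt"
proof -
  obtain e Ow where eO: "e > 0" "open Ow" "fatten (Xs (t-1)) e \<subseteq> Ow" "continuous_on Ow qt"
    "\<forall>y\<in>Ow. Q t y = ereal (qt y)" using stage_t by blast
  have cK: "compact (fatten (Xs (t-1)) e)" using Xt1 by (intro compact_fatten) auto
  have "continuous_on (fatten (Xs (t-1)) e) qt" using eO continuous_on_subset by blast
  then have "compact (qt ` fatten (Xs (t-1)) e)" using cK by (rule compact_continuous_image)
  then obtain U where U: "\<forall>v\<in>qt ` fatten (Xs (t-1)) e. norm v \<le> U"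
    using compact_imp_bounded bounded_iff by metis
  have XK: "Xs (t-1) \<subseteq> fatten (Xs (t-1)) e" using eO(1) by (intro fatten_self) auto
  have "compact (Xs (t-1))" using Xt1 by auto
  moreover have "continuous_on (Xs (t-1)) qt" using eO XK continuous_on_subset by blast
  ultimately have "uniformly_continuous_on (Xs (t-1)) qt" using compact_uniformly_continuous by blast
  then show ?thesis using eO U by (intro exI[of _ e] exI[of _ U]) (auto dest: abs_le_D1)
qed

lemma slope_bound:
  assumes g: "good0 \<omega>" shows "\<exists>L. \<forall>k\<ge>1. norm (bet k t \<omega>) \<le> L"
proof -
  obtain e U where eU: "e > 0" "\<forall>y\<in>fatten (Xs (t-1)) e. Q t y = ereal (qt y) \<and> qt y \<le> U"
    using stage_t2 by blast
  have tt: "t \<in> {2..T}" using t_range by auto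
  obtain B where B: "\<forall>y\<in>Xs (t-1). norm y \<le> B"
    using Xt1 compact_imp_bounded bounded_iff by metis
  define x1 where "x1 = xn 1 t \<omega>"
  have x1X: "x1 \<in> Xs (t-1)" unfolding x1_def using xn_in[OF g] by simp
  define F where "F j z = Qinf f Xf (Qk 1 (Suc t) \<omega>) t z (xi t j)" for j z
  define v where "v j = real_of_ereal (F j x1)" for j
  have sg: "is_subgrad (F j) x1 (pi 1 t j \<omega>)" if "j < M" for j
    using bw_sub[OF _ tt that] unfolding F_def x1_def by simp
  have Fv: "F j x1 = ereal (v j)" if "j < M" for j
    using sg[OF that] unfolding is_subgrad_def v_def by (cases "F j x1") auto
  define L\<theta> where "L\<theta> = (\<Sum>j<M. p t j * (v j - norm (pi 1 t j \<omega>) * (2 * B)))"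
  have thlow: "ereal L\<theta> \<le> th k t \<omega>" if k: "1 \<le> k" for k
  proof -
    have "ereal L\<theta> = (\<Sum>j<M. ereal (p t j) * ereal (v j - norm (pi 1 t j \<omega>) * (2 * B)))"
      unfolding L\<theta>_def sum_ereal[symmetric] by simp
    also have "\<dots> \<le> th k t \<omega>" unfolding th_def
    proof (rule sum_mono)
      fix j assume "j \<in> {..<M}"
      then have j: "j < M" by simp
      have xk: "xn k t \<omega> \<in> Xs (t-1)" using xn_in[OF g k] .
      have "norm (xn k t \<omega> - x1) \<le> 2 * B"
      proof -
        have "norm (xn k t \<omega>) \<le> B" "norm x1 \<le> B" using B xk x1X by auto
        then show ?thesis using norm_triangle_ineq4[of "xn k t \<omega>" x1] by linarith
      qed
      then have "- (pi 1 t j \<omega> \<bullet> (xn k t \<omega> - x1)) \<le> norm (pi 1 t j \<omega>) * (2 * B)"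
        using Cauchy_Schwarz_ineq2[of "pi 1 t j \<omega>" "xn k t \<omega> - x1"] norm_ge_zero[of "pi 1 t j \<omega>"]
        by (smt (verit) mult_left_mono)
      then have "ereal (v j - norm (pi 1 t j \<omega>) * (2 * B)) \<le> F j x1 + ereal (pi 1 t j \<omega> \<bullet> (xn k t \<omega> - x1))"
        using Fv[OF j] by simp
      also have "\<dots> \<le> F j (xn k t \<omega>)" using sg[OF j] unfolding is_subgrad_def by blast
      also have "\<dots> \<le> Qinf f Xf (Qk k (Suc t) \<omega>) t (xn k t \<omega>) (xi t j)"
        unfolding F_def by (rule Qinf_mono) (use Qk_mono t_range k in auto)
      finally show "ereal (p t j) * ereal (v j - norm (pi 1 t j \<omega>) * (2 * B))
          \<le> ereal (p t j) * Qinf f Xf (Qk k (Suc t) \<omega>) t (xn k t \<omega>) (xi t j)"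
        using p_ge0[OF tt j] by (intro ereal_mult_left_mono) auto
    qed
    finally show ?thesis .
  qed
  have "norm (bet k t \<omega>) \<le> (U - L\<theta>) / e" if k: "1 \<le> k" for k
  proof (cases "bet k t \<omega> = 0")
    case True
    have "ereal L\<theta> \<le> th k t \<omega>" by (rule thlow[OF k])
    also have "th k t \<omega> = cutf k t \<omega> (xn k t \<omega>)" unfolding cutf_def by simp
    also have "\<dots> \<le> Qk k t \<omega> (xn k t \<omega>)" using bw_eq[OF k tt] by simp
    also have "\<dots> \<le> Q t (xn k t \<omega>)" using valid t_range by auto
    also have "\<dots> = ereal (qt (xn k t \<omega>))" using eU xn_in[OF g k] fatten_self[of e] by auto
    also have "\<dots> \<le> ereal U" using eU xn_in[OF g k] fatten_self[of e] by auto
    finally show ?thesis using True eU(1) by (simp add: divide_nonneg_pos)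
  next
    case False
    define bb where "bb = bet k t \<omega>"
    have nb: "norm bb > 0" using False unfolding bb_def by simp
    define z where "z = xn k t \<omega> + (e / norm bb) *\<^sub>R bb"
    have "dist (xn k t \<omega>) z = e" unfolding z_def dist_norm using nb eU(1) by simp
    then have zK: "z \<in> fatten (Xs (t-1)) e" using xn_in[OF g k] unfolding mem_fatten by auto
    have inn: "bb \<bullet> (z - xn k t \<omega>) = e * norm bb"
      unfolding z_def using nb by (simp add: power2_norm_eq_inner[symmetric] power2_eq_square)
    have "ereal L\<theta> + ereal (e * norm bb) \<le> th k t \<omega> + ereal (e * norm bb)"
      using thlow[OF k] by (rule add_right_mono)
    also have "\<dots> = cutf k t \<omega> z" unfolding cutf_def bb_def[symmetric] inn ..
    also have "\<dots> \<le> Qk k t \<omega> z" using bw_eq[OF k tt] by simp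
    also have "\<dots> \<le> Q t z" using valid t_range by auto
    also have "\<dots> = ereal (qt z)" using eU zK by auto
    also have "\<dots> \<le> ereal U" using eU zK by auto
    finally have "L\<theta> + e * norm bb \<le> U" by simp
    then have "e * norm bb \<le> U - L\<theta>" by simp
    then show ?thesis unfolding bb_def[symmetric] using eU(1) by (simp add: field_simps)
  qed
  then show ?thesis by blast
qed

end



lemma sigma_sets_Int2:
  assumes "A \<subseteq> Pow sp" "a \<in> sigma_sets sp A" "b \<in> sigma_sets sp A"
  shows "a \<inter> b \<in> sigma_sets sp A"
proof -
  interpret sigma_algebra sp "sigma_sets sp A" using sigma_algebra_sigma_sets[OF assms(1)] .
  show ?thesis using assms(2,3) by (rule Int)
qed

lemma sigma_sets_top: "sp \<in> sigma_sets sp A"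
proof -
  have "sp - {} \<in> sigma_sets sp A" by (intro sigma_sets.Compl sigma_sets.Empty)
  then show ?thesis by simp
qed

context S6 begin

lemma samples_agree_mono: "samples_agree J T k' \<omega> \<omega>' \<Longrightarrow> k \<le> k' \<Longrightarrow> samples_agree J T k \<omega> \<omega>'"
  unfolding samples_agree_def by auto

lemma sampled_node_agree:
  assumes "samples_agree J T (Suc k) \<omega> \<omega>'" "1 \<le> k" "s \<le> T"
  shows "sampled_node J k s \<omega> = sampled_node J k s \<omega>'"
  using assms unfolding samples_agree_def sampled_node_def by auto

lemma Qk_adapt: "samples_agree J T (Suc k) \<omega> \<omega>' \<Longrightarrow> s \<in> {2..Suc T} \<Longrightarrow> Qk k s \<omega> = Qk k s \<omega>'"
proof (induction k arbitrary: s)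
  case 0
  then show ?case using Q_init Qk_last by (cases "s = Suc T") auto
next
  case (Suc k)
  note IHk = Suc.IH
  note agS = Suc.prems(1)
  have agk: "samples_agree J T (Suc k) \<omega> \<omega>'" using Suc.prems(1) samples_agree_mono by fastforce
  have agk1: "samples_agree J T (Suc k) \<omega> \<omega>'" using agk .
  have main: "Qk (Suc k) (Suc T - i) \<omega> = Qk (Suc k) (Suc T - i) \<omega>'" if "i \<le> T - 1" for i
    using that
  proof (induction i)
    case 0 then show ?case using Qk_last by simp
  next
    case (Suc i)
    define s where "s = Suc T - Suc i"
    have s: "s \<in> {2..T}" and ss: "Suc s = Suc T - i" using Suc.prems unfolding s_def by auto
    have IHs: "Qk (Suc k) (Suc s) \<omega> = Qk (Suc k) (Suc s) \<omega>'" using Suc.IH Suc.prems unfolding ss by auto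
    have sn: "sampled_node J (Suc k) (s - 1) \<omega> = sampled_node J (Suc k) (s - 1) \<omega>'"
      using agS s by (intro sampled_node_agree) auto
    have xx: "xn (Suc k) s \<omega> = xn (Suc k) s \<omega>'"
      unfolding xn_def sn using x_adapted agk by auto
    have pp: "pi (Suc k) s j \<omega> = pi (Suc k) s j \<omega>'" for j
      using pi_adapted[rule_format, of "Suc k" \<omega> \<omega>'] agS by simp
    have cc: "cutf (Suc k) s \<omega> = cutf (Suc k) s \<omega>'"
      unfolding cutf_def th_def bet_def xx pp IHs ..
    have "Qk k s \<omega> = Qk k s \<omega>'" using IHk agk s by auto
    then show ?case unfolding s_def[symmetric]
      using bw_eq[of "Suc k" s \<omega>] bw_eq[of "Suc k" s \<omega>'] s cc by auto
  qed
  have "Suc T - s \<le> T - 1" using Suc.prems by auto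
  from main[OF this] show ?case using Suc.prems by (simp add: Suc_diff_le)
qed

end



context S6 begin

definition "agree k r \<omega> \<omega>' \<longleftrightarrow> samples_agree J T k \<omega> \<omega>' \<and> (\<forall>s\<in>{2..<r}. J k s \<omega> = J k s \<omega>')"
definition "Past k r = {J k' s' -` {j} \<inter> space PS | j k' s'.
              (1 \<le> k' \<and> k' < k \<and> s' \<in> {2..T}) \<or> (k' = k \<and> s' \<in> {2..<r})}"

lemma Past_Pow: "Past k r \<subseteq> Pow (space PS)"
  unfolding Past_def by auto

lemma cyl_sigma:
  assumes "set L \<subseteq> I" "\<forall>(a,b)\<in>I. \<forall>v. J a b -` {v} \<inter> space PS \<in> G" "G \<subseteq> Pow (space PS)"
  shows "{\<omega>\<in>space PS. map (\<lambda>(a,b). J a b \<omega>) L = l} \<in> sigma_sets (space PS) G"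
  using assms(1)
proof (induction L arbitrary: l)
  case Nil
  show ?case
  proof (cases "l = []")
    case True then show ?thesis by (simp add: sigma_sets_top)
  next
    case False then show ?thesis by (simp add: sigma_sets.Empty)
  qed
next
  case (Cons ab L)
  obtain a b where ab: "ab = (a,b)" by force
  show ?case
  proof (cases l)
    case Nil then show ?thesis by (simp add: sigma_sets.Empty)
  next
    case (Cons v l')
    have "{\<omega>\<in>space PS. map (\<lambda>(a,b). J a b \<omega>) (ab # L) = l}
        = (J a b -` {v} \<inter> space PS) \<inter> {\<omega>\<in>space PS. map (\<lambda>(a,b). J a b \<omega>) L = l'}"
      unfolding ab Cons by auto
    moreover have "J a b -` {v} \<inter> space PS \<in> sigma_sets (space PS) G"
      using Cons.prems assms(2) unfolding ab by (intro sigma_sets.Basic) auto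
    moreover have "{\<omega>\<in>space PS. map (\<lambda>(a,b). J a b \<omega>) L = l'} \<in> sigma_sets (space PS) G"
      using Cons.IH Cons.prems by auto
    ultimately show ?thesis using sigma_sets_Int2[OF assms(3)] by simp
  qed
qed

lemma det_sigma:
  assumes hP: "\<And>\<omega> \<omega>'. agree k r \<omega> \<omega>' \<Longrightarrow> (P \<omega> \<longleftrightarrow> P \<omega>')"
  shows "{\<omega>\<in>space PS. P \<omega>} \<in> sigma_sets (space PS) (Past k r)"
proof -
  define L where "L = List.product [1..<k] [2..<Suc T] @ map (\<lambda>s. (k,s)) [2..<r]"
  define vec where "vec \<omega> = map (\<lambda>(a,b). J a b \<omega>) L" for \<omega>
  have ag: "agree k r \<omega> \<omega>'" if "vec \<omega> = vec \<omega>'" for \<omega> \<omega>'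
  proof -
    have "\<forall>(a,b)\<in>set L. J a b \<omega> = J a b \<omega>'" using that unfolding vec_def map_eq_conv by auto
    then show ?thesis unfolding agree_def samples_agree_def L_def by auto
  qed
  have eq: "{\<omega>\<in>space PS. P \<omega>} = \<Union> ((\<lambda>l. {\<omega>\<in>space PS. vec \<omega> = l}) ` (vec ` {\<omega>\<in>space PS. P \<omega>}))"
  proof (intro set_eqI iffI)
    fix \<omega> assume "\<omega> \<in> {\<omega>\<in>space PS. P \<omega>}"
    then show "\<omega> \<in> \<Union> ((\<lambda>l. {\<omega>\<in>space PS. vec \<omega> = l}) ` (vec ` {\<omega>\<in>space PS. P \<omega>}))" by blast
  next
    fix \<omega> assume "\<omega> \<in> \<Union> ((\<lambda>l. {\<omega>\<in>space PS. vec \<omega> = l}) ` (vec ` {\<omega>\<in>space PS. P \<omega>}))"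
    then obtain \<omega>0 where "\<omega>0 \<in> space PS" "P \<omega>0" "\<omega> \<in> space PS" "vec \<omega> = vec \<omega>0" by blast
    then show "\<omega> \<in> {\<omega>\<in>space PS. P \<omega>}" using hP ag by blast
  qed
  have gen: "\<forall>(a,b)\<in>set L. \<forall>v. J a b -` {v} \<inter> space PS \<in> Past k r"
  proof (intro ballI allI, clarify)
    fix a b v assume "(a,b) \<in> set L"
    then have "(1 \<le> a \<and> a < k \<and> b \<in> {2..T}) \<or> (a = k \<and> b \<in> {2..<r})" unfolding L_def by auto
    then show "J a b -` {v} \<inter> space PS \<in> Past k r" unfolding Past_def by blast
  qed
  have "\<Union> ((\<lambda>l. {\<omega>\<in>space PS. vec \<omega> = l}) ` (vec ` {\<omega>\<in>space PS. P \<omega>})) \<in> sigma_sets (space PS) (Past k r)"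
  proof (rule sigma_sets_UNION)
    show "countable ((\<lambda>l. {\<omega>\<in>space PS. vec \<omega> = l}) ` (vec ` {\<omega>\<in>space PS. P \<omega>}))"
      by (intro countable_image countableI_type)
    show "b \<in> sigma_sets (space PS) (Past k r)"
      if "b \<in> (\<lambda>l. {\<omega>\<in>space PS. vec \<omega> = l}) ` (vec ` {\<omega>\<in>space PS. P \<omega>})" for b
      using that cyl_sigma[OF subset_refl gen Past_Pow] unfolding vec_def by auto
  qed
  then show ?thesis using eq by simp
qed

lemma det_sets:
  assumes hP: "\<And>\<omega> \<omega>'. samples_agree J T k \<omega> \<omega>' \<Longrightarrow> (P \<omega> \<longleftrightarrow> P \<omega>')"
  shows "{\<omega>\<in>space PS. P \<omega>} \<in> P.events"
proof -
  have "{\<omega>\<in>space PS. P \<omega>} \<in> sigma_sets (space PS) (Past k 2)"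
    by (rule det_sigma) (use hP in \<open>auto simp: agree_def\<close>)
  moreover have "Past k 2 \<subseteq> P.events"
  proof
    fix A assume "A \<in> Past k 2"
    then obtain j k' s' where "A = J k' s' -` {j} \<inter> space PS" "1 \<le> k'" "s' \<in> {2..T}"
      unfolding Past_def by auto
    moreover have "J k' s' \<in> measurable PS (count_space UNIV)" using J_meas calculation by blast
    ultimately show "A \<in> P.events" by (simp add: measurable_sets)
  qed
  ultimately show ?thesis using sets.sigma_sets_subset by blast
qed

definition "cB = (\<Prod>r\<in>{2..<t}. p r (n ! (r - 2)))"

lemma n_props: "length n = t - 2" "set n \<subseteq> {..<M}"
  using n_node unfolding tree_nodes_def by auto

lemma n_nth: "r \<in> {2..<t} \<Longrightarrow> n ! (r - 2) < M"
  using n_props by (auto intro!: nth_mem[THEN subsetD[OF n_props(2)], simplified])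

lemma sn_iff: "sampled_node J k (t-1) \<omega> = n \<longleftrightarrow> (\<forall>r\<in>{2..<t}. J k r \<omega> = n ! (r - 2))"
proof -
  have sn: "sampled_node J k (t-1) \<omega> = map (\<lambda>r. J k r \<omega>) [2..<t]"
    unfolding sampled_node_def using t_range by (simp add: Suc_diff_le)
  show ?thesis
  proof
    assume h: "sampled_node J k (t-1) \<omega> = n"
    show "\<forall>r\<in>{2..<t}. J k r \<omega> = n ! (r - 2)"
    proof
      fix r assume r: "r \<in> {2..<t}"
      have i: "r - 2 < t - 2" using r by auto
      have "n ! (r - 2) = map (\<lambda>r. J k r \<omega>) [2..<t] ! (r - 2)" using h sn by simp
      also have "\<dots> = J k ([2..<t] ! (r - 2)) \<omega>" using i by simp
      also have "[2..<t] ! (r - 2) = r" using r by (subst nth_upt) auto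
      finally have "n ! (r - 2) = J k r \<omega>" .
      then show "J k r \<omega> = n ! (r - 2)" by simp
    qed
  next
    assume h: "\<forall>r\<in>{2..<t}. J k r \<omega> = n ! (r - 2)"
    have "map (\<lambda>r. J k r \<omega>) [2..<t] = n"
    proof (rule nth_equalityI)
      show "length (map (\<lambda>r. J k r \<omega>) [2..<t]) = length n" using n_props by simp
      fix i assume "i < length (map (\<lambda>r. J k r \<omega>) [2..<t])"
      then have i: "i < t - 2" by simp
      then have "2 + i \<in> {2..<t}" by auto
      then show "map (\<lambda>r. J k r \<omega>) [2..<t] ! i = n ! i" using h i by fastforce
    qed
    then show "sampled_node J k (t-1) \<omega> = n" using sn by simp
  qed
qed

lemma indep_B:
  assumes k: "1 \<le> k" and hP: "\<And>\<omega> \<omega>'. samples_agree J T k \<omega> \<omega>' \<Longrightarrow> (P \<omega> \<longleftrightarrow> P \<omega>')"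
  shows "P.prob {\<omega>\<in>space PS. P \<omega> \<and> sampled_node J k (t-1) \<omega> = n} = P.prob {\<omega>\<in>space PS. P \<omega>} * cB"
proof -
  define S where "S d = {\<omega>\<in>space PS. P \<omega> \<and> (\<forall>r\<in>{2..<2+d}. J k r \<omega> = n ! (r - 2))}" for d
  have main: "P.prob (S d) = P.prob {\<omega>\<in>space PS. P \<omega>} * (\<Prod>r\<in>{2..<2+d}. p r (n ! (r - 2)))"
    if "d \<le> t - 2" for d
    using that
  proof (induction d)
    case 0 then show ?case unfolding S_def by simp
  next
    case (Suc d)
    define r where "r = 2 + d"
    have r: "r \<in> {2..<t}" "r \<in> {2..T}" using Suc.prems t_range unfolding r_def by auto
    have eqS: "S (Suc d) = (J k r -` {n ! (r - 2)} \<inter> space PS) \<inter> S d"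
      unfolding S_def r_def by (auto simp: less_Suc_eq)
    have ind: "prob_space.indep_set PS
          (sigma_sets (space PS) {J k r -` {j} \<inter> space PS | j. True})
          (sigma_sets (space PS) (Past k r))"
      using J_indep k r(2) unfolding Past_def by blast
    have a: "J k r -` {n ! (r - 2)} \<inter> space PS \<in> sigma_sets (space PS) {J k r -` {j} \<inter> space PS | j. True}"
      by (intro sigma_sets.Basic) auto
    have b: "S d \<in> sigma_sets (space PS) (Past k r)"
      unfolding S_def
    proof (rule det_sigma)
      fix \<omega> \<omega>' assume "agree k r \<omega> \<omega>'"
      then show "(P \<omega> \<and> (\<forall>r'\<in>{2..<2+d}. J k r' \<omega> = n ! (r' - 2))) \<longleftrightarrow>
                 (P \<omega>' \<and> (\<forall>r'\<in>{2..<2+d}. J k r' \<omega>' = n ! (r' - 2)))"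
        unfolding agree_def r_def using hP by auto
    qed
    have "P.prob (S (Suc d)) = P.prob (J k r -` {n ! (r - 2)} \<inter> space PS) * P.prob (S d)"
      unfolding eqS by (rule prob_space.indep_setD[OF PS ind a b])
    moreover have "P.prob (J k r -` {n ! (r - 2)} \<inter> space PS) = p r (n ! (r - 2))"
    proof -
      have "J k r -` {n ! (r - 2)} \<inter> space PS = {\<omega> \<in> space PS. J k r \<omega> = n ! (r - 2)}" by auto
      then show ?thesis using J_dist k r(2) n_nth[OF r(1)] by simp
    qed
    moreover have "(\<Prod>r\<in>{2..<Suc (2+d)}. p r (n ! (r - 2))) = (\<Prod>r\<in>{2..<2+d}. p r (n ! (r - 2))) * p (2+d) (n ! (2 + d - 2))"
      by (rule prod.atLeastLessThan_Suc) simp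
    moreover have "P.prob (S d) = P.prob {\<omega>\<in>space PS. P \<omega>} * (\<Prod>r\<in>{2..<2+d}. p r (n ! (r - 2)))"
      using Suc.IH Suc.prems by simp
    ultimately show ?case unfolding r_def add_Suc_right by (simp only: mult_ac)
  qed
  have "S (t - 2) = {\<omega>\<in>space PS. P \<omega> \<and> sampled_node J k (t-1) \<omega> = n}"
    unfolding S_def sn_iff using t_range by auto
  moreover have "2 + (t - 2) = t" using t_range by auto
  ultimately show ?thesis using main[of "t-2"] unfolding cB_def by simp
qed

lemma cB_pos: "0 < cB"
  unfolding cB_def using t_range by (intro prod_pos p_gt0 n_nth) auto

lemma cB_le1: "cB \<le> 1"
proof -
  have "P.prob {\<omega>\<in>space PS. True \<and> sampled_node J 1 (t-1) \<omega> = n} = P.prob {\<omega>\<in>space PS. True} * cB"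
    by (rule indep_B) auto
  then have "cB = P.prob {\<omega>\<in>space PS. sampled_node J 1 (t-1) \<omega> = n}" by (simp add: P.prob_space)
  then show ?thesis using P.prob_le_1 by simp
qed

end



context S6 begin

definition "Bn k \<omega> \<longleftrightarrow> sampled_node J k (t-1) \<omega> = n"
definition "qq = 1 - cB / 2"
definition "ww = 1 / qq"

lemma qq: "0 < qq" "qq < 1" "1 \<le> ww" "(1 - cB) * ww \<le> 1" "0 < ww"
  using cB_pos cB_le1 unfolding qq_def ww_def by (auto simp: field_simps)

lemma hB: "1 \<le> k \<Longrightarrow> samples_agree J T (Suc k) \<omega> \<omega>' \<Longrightarrow> (Bn k \<omega> \<longleftrightarrow> Bn k \<omega>')"
  unfolding Bn_def using sampled_node_agree[of k \<omega> \<omega>' "t-1"] t_range by auto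

context
  fixes A :: "nat \<Rightarrow> 'w \<Rightarrow> bool"
  assumes hA: "\<And>k \<omega> \<omega>'. 1 \<le> k \<Longrightarrow> samples_agree J T k \<omega> \<omega>' \<Longrightarrow> (A k \<omega> \<longleftrightarrow> A k \<omega>')"
begin

definition "okA m K \<omega> \<longleftrightarrow> (\<forall>k\<in>{m..<K}. A k \<omega> \<longrightarrow> \<not> Bn k \<omega>)"
definition "cnt m K \<omega> = card {k\<in>{m..<K}. A k \<omega>}"
definition "EE m K j = {\<omega>\<in>space PS. okA m K \<omega> \<and> cnt m K \<omega> = j}"
definition "Phi m K = (\<Sum>j\<le>K. ww^j * P.prob (EE m K j))"

lemma det_okcnt:
  assumes m: "1 \<le> m" and ag: "samples_agree J T K \<omega> \<omega>'"
  shows "(okA m K \<omega> \<longleftrightarrow> okA m K \<omega>') \<and> cnt m K \<omega> = cnt m K \<omega>'"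
proof -
  have "A k \<omega> = A k \<omega>' \<and> Bn k \<omega> = Bn k \<omega>'" if k: "k \<in> {m..<K}" for k
  proof -
    have "samples_agree J T k \<omega> \<omega>'" "samples_agree J T (Suc k) \<omega> \<omega>'"
      using ag k by (auto intro: samples_agree_mono)
    then show ?thesis using hA hB m k by auto
  qed
  then show ?thesis unfolding okA_def cnt_def
    by (metis (mono_tags, lifting) Collect_cong)
qed

lemma EE_meas: assumes m: "1 \<le> m" shows "EE m K j \<in> P.events"
  unfolding EE_def
proof (rule det_sets[of K])
  fix \<omega> \<omega>' assume "samples_agree J T K \<omega> \<omega>'"
  then show "(okA m K \<omega> \<and> cnt m K \<omega> = j) \<longleftrightarrow> (okA m K \<omega>' \<and> cnt m K \<omega>' = j)"
    using det_okcnt[OF m] by auto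
qed

lemma A_meas: "1 \<le> K \<Longrightarrow> {\<omega>\<in>space PS. A K \<omega>} \<in> P.events"
  by (rule det_sets[of K]) (use hA in blast)

lemma B_meas: "1 \<le> K \<Longrightarrow> {\<omega>\<in>space PS. Bn K \<omega>} \<in> P.events"
  by (rule det_sets[of "Suc K"]) (use hB in blast)

lemma cnt_le: "cnt m K \<omega> \<le> K"
proof -
  have "cnt m K \<omega> \<le> card {m..<K}" unfolding cnt_def by (intro card_mono) auto
  then show ?thesis by simp
qed

lemma cnt_mono: "K1 \<le> K2 \<Longrightarrow> cnt m K1 \<omega> \<le> cnt m K2 \<omega>"
  unfolding cnt_def by (intro card_mono) auto

lemma Phi_step:
  assumes m: "1 \<le> m" and mK: "m \<le> K"
  shows "Phi m (Suc K) \<le> Phi m K"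
proof -
  have K1: "1 \<le> K" using m mK by simp
  define Aset where "Aset = {\<omega>\<in>space PS. A K \<omega>}"
  define Bset where "Bset = {\<omega>\<in>space PS. Bn K \<omega>}"
  define F where "F j = {\<omega>\<in>space PS. okA m K \<omega> \<and> A K \<omega> \<and> \<not> Bn K \<omega> \<and> Suc (cnt m K \<omega>) = j}" for j
  define e where "e j = P.prob (EE m K j)" for j
  define a where "a j = P.prob (EE m K j \<inter> Aset)" for j
  define fp where "fp j = P.prob (F j)" for j
  have Am: "Aset \<in> P.events" unfolding Aset_def by (rule A_meas[OF K1])
  have Bm: "Bset \<in> P.events" unfolding Bset_def by (rule B_meas[OF K1])
  have Em: "EE m K j \<in> P.events" for j by (rule EE_meas[OF m])
  have Fm: "F j \<in> P.events" for j
    unfolding F_def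
  proof (rule det_sets[of "Suc K"])
    fix \<omega> \<omega>' assume ag: "samples_agree J T (Suc K) \<omega> \<omega>'"
    have "samples_agree J T K \<omega> \<omega>'" using ag by (auto intro: samples_agree_mono)
    then show "(okA m K \<omega> \<and> A K \<omega> \<and> \<not> Bn K \<omega> \<and> Suc (cnt m K \<omega>) = j) \<longleftrightarrow>
               (okA m K \<omega>' \<and> A K \<omega>' \<and> \<not> Bn K \<omega>' \<and> Suc (cnt m K \<omega>') = j)"
      using det_okcnt[OF m] hA[OF K1] hB[OF K1 ag] by auto
  qed
  have okS: "okA m (Suc K) \<omega> \<longleftrightarrow> okA m K \<omega> \<and> (A K \<omega> \<longrightarrow> \<not> Bn K \<omega>)" for \<omega>
  proof -
    have "{m..<Suc K} = insert K {m..<K}" using mK by auto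
    then show ?thesis unfolding okA_def by auto
  qed
  have cS: "cnt m (Suc K) \<omega> = (if A K \<omega> then Suc (cnt m K \<omega>) else cnt m K \<omega>)" for \<omega>
  proof -
    have "{k\<in>{m..<Suc K}. A k \<omega>} = (if A K \<omega> then insert K {k\<in>{m..<K}. A k \<omega>} else {k\<in>{m..<K}. A k \<omega>})"
      using mK by (auto simp: less_Suc_eq)
    then show ?thesis unfolding cnt_def by auto
  qed
  have h1: "P.prob (EE m (Suc K) j) = e j - a j + fp j" for j
  proof -
    have eq: "EE m (Suc K) j = (EE m K j - Aset) \<union> F j"
      unfolding EE_def F_def Aset_def using okS cS by auto
    have "P.prob (EE m (Suc K) j) = P.prob (EE m K j - Aset) + P.prob (F j)"
      unfolding eq by (rule P.finite_measure_Union) (use Em Am Fm in \<open>auto simp: F_def Aset_def\<close>)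
    also have "P.prob (EE m K j - Aset) = e j - a j"
      unfolding e_def a_def by (rule P.finite_measure_Diff'[OF Em Am])
    finally show ?thesis unfolding fp_def by simp
  qed
  have h2: "fp (Suc j) = (1 - cB) * a j" for j
  proof -
    have eqF: "F (Suc j) = (EE m K j \<inter> Aset) - (EE m K j \<inter> Aset \<inter> Bset)"
      unfolding F_def EE_def Aset_def Bset_def by auto
    have ind: "P.prob {\<omega>\<in>space PS. (okA m K \<omega> \<and> cnt m K \<omega> = j \<and> A K \<omega>) \<and> sampled_node J K (t-1) \<omega> = n}
        = P.prob {\<omega>\<in>space PS. okA m K \<omega> \<and> cnt m K \<omega> = j \<and> A K \<omega>} * cB"
    proof (rule indep_B[OF K1])
      fix \<omega> \<omega>' assume ag: "samples_agree J T K \<omega> \<omega>'"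
      have "(okA m K \<omega> \<longleftrightarrow> okA m K \<omega>') \<and> cnt m K \<omega> = cnt m K \<omega>'" by (rule det_okcnt[OF m ag])
      moreover have "A K \<omega> \<longleftrightarrow> A K \<omega>'" by (rule hA[OF K1 ag])
      ultimately show "(okA m K \<omega> \<and> cnt m K \<omega> = j \<and> A K \<omega>) \<longleftrightarrow> (okA m K \<omega>' \<and> cnt m K \<omega>' = j \<and> A K \<omega>')"
        by simp
    qed
    have e1: "{\<omega>\<in>space PS. (okA m K \<omega> \<and> cnt m K \<omega> = j \<and> A K \<omega>) \<and> sampled_node J K (t-1) \<omega> = n}
        = EE m K j \<inter> Aset \<inter> Bset" unfolding EE_def Aset_def Bset_def Bn_def by auto
    have e2: "{\<omega>\<in>space PS. okA m K \<omega> \<and> cnt m K \<omega> = j \<and> A K \<omega>} = EE m K j \<inter> Aset"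
      unfolding EE_def Aset_def by auto
    have "fp (Suc j) = P.prob (EE m K j \<inter> Aset) - P.prob (EE m K j \<inter> Aset \<inter> Bset)"
      unfolding fp_def eqF by (rule P.finite_measure_Diff) (use Em Am Bm in auto)
    also have "\<dots> = a j - a j * cB" using ind unfolding e1 e2 a_def by simp
    finally show ?thesis by (simp add: algebra_simps)
  qed
  have h0: "fp 0 = 0" unfolding fp_def F_def by simp
  have h3: "e (Suc K) = 0" "a (Suc K) = 0"
  proof -
    have "EE m K (Suc K) = {}" unfolding EE_def using cnt_le[of m K] by (auto simp: le_imp_less_Suc less_not_refl3)
    then show "e (Suc K) = 0" "a (Suc K) = 0" unfolding e_def a_def by auto
  qed
  have "Phi m (Suc K) = (\<Sum>j\<le>Suc K. ww^j * (e j - a j)) + (\<Sum>j\<le>Suc K. ww^j * fp j)"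
    unfolding Phi_def h1 by (simp add: distrib_left sum.distrib)
  also have "(\<Sum>j\<le>Suc K. ww^j * (e j - a j)) = (\<Sum>j\<le>K. ww^j * (e j - a j))"
    using h3 by simp
  also have "(\<Sum>j\<le>Suc K. ww^j * fp j) = (\<Sum>j\<le>K. ww^(Suc j) * ((1 - cB) * a j))"
    unfolding sum.atMost_Suc_shift h0 h2 by simp
  also have "(\<Sum>j\<le>K. ww^j * (e j - a j)) + (\<Sum>j\<le>K. ww^(Suc j) * ((1 - cB) * a j))
      = (\<Sum>j\<le>K. ww^j * e j + ww^j * a j * ((1 - cB) * ww - 1))"
    unfolding sum.distrib[symmetric] by (intro sum.cong) (auto simp: algebra_simps)
  also have "\<dots> \<le> (\<Sum>j\<le>K. ww^j * e j)"
  proof (rule sum_mono)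
    fix j
    have "0 \<le> ww^j * a j" using qq unfolding a_def by simp
    moreover have "(1 - cB) * ww - 1 \<le> 0" using qq by simp
    ultimately have "ww^j * a j * ((1 - cB) * ww - 1) \<le> 0" by (rule mult_nonneg_nonpos)
    then show "ww^j * e j + ww^j * a j * ((1 - cB) * ww - 1) \<le> ww^j * e j" by simp
  qed
  also have "\<dots> = Phi m K" unfolding Phi_def e_def ..
  finally show ?thesis .
qed

lemma Phi_le1:
  assumes m: "1 \<le> m" and mK: "m \<le> K"
  shows "Phi m K \<le> 1"
  using mK
proof (induction K rule: dec_induct)
  case base
  have "EE m m j = (if j = 0 then space PS else {})" for j
    unfolding EE_def okA_def cnt_def by auto
  then have "Phi m m = (\<Sum>j\<le>m. if j = 0 then 1 else 0)"
    unfolding Phi_def by (intro sum.cong) (auto simp: P.prob_space)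
  also have "\<dots> = 1" by simp
  finally show ?case by simp
next
  case (step K)
  then show ?case using Phi_step[OF m, of K] by simp
qed

lemma tail:
  assumes m: "1 \<le> m" and mK: "m \<le> K"
  shows "P.prob {\<omega>\<in>space PS. okA m K \<omega> \<and> N \<le> cnt m K \<omega>} \<le> qq^N"
proof -
  have eq: "{\<omega>\<in>space PS. okA m K \<omega> \<and> N \<le> cnt m K \<omega>} = (\<Union>j\<in>{N..K}. EE m K j)"
    unfolding EE_def using cnt_le[of m K] by auto
  have "P.prob (\<Union>j\<in>{N..K}. EE m K j) = (\<Sum>j\<in>{N..K}. P.prob (EE m K j))"
  proof (rule P.finite_measure_finite_Union)
    show "disjoint_family_on (EE m K) {N..K}" unfolding disjoint_family_on_def EE_def by auto
  qed (use EE_meas[OF m] in auto)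
  then have "ww^N * P.prob {\<omega>\<in>space PS. okA m K \<omega> \<and> N \<le> cnt m K \<omega>} = (\<Sum>j\<in>{N..K}. ww^N * P.prob (EE m K j))"
    unfolding eq by (simp add: sum_distrib_left)
  also have "\<dots> \<le> (\<Sum>j\<in>{N..K}. ww^j * P.prob (EE m K j))"
    using qq by (intro sum_mono mult_right_mono power_increasing) auto
  also have "\<dots> \<le> (\<Sum>j\<le>K. ww^j * P.prob (EE m K j))"
    using qq by (intro sum_mono2) auto
  also have "\<dots> \<le> 1" using Phi_le1[OF m mK] unfolding Phi_def .
  finally have "ww^N * P.prob {\<omega>\<in>space PS. okA m K \<omega> \<and> N \<le> cnt m K \<omega>} \<le> 1" .
  moreover have "ww^N * qq^N = 1" using qq unfolding ww_def by (simp add: power_mult_distrib[symmetric])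
  moreover have "0 < ww^N" using qq by simp
  ultimately show ?thesis
    by (metis mult.commute mult_le_cancel_left_pos mult_cancel_right1 nle_le)
qed


lemma BC: "AE \<omega> in PS. (\<exists>\<^sub>\<infinity>k. A k \<omega>) \<longrightarrow> (\<exists>\<^sub>\<infinity>k. 1 \<le> k \<and> A k \<omega> \<and> Bn k \<omega>)"
proof -
  define Nm where "Nm m = {\<omega>\<in>space PS. (\<forall>k. m \<le> k \<longrightarrow> A k \<omega> \<longrightarrow> \<not> Bn k \<omega>) \<and> (\<forall>N. \<exists>K. N \<le> cnt m K \<omega>)}" for m
  have base_meas: "{\<omega>\<in>space PS. m \<le> k \<longrightarrow> A k \<omega> \<longrightarrow> \<not> Bn k \<omega>} \<in> P.events" if m: "1 \<le> m" for m k
  proof (rule det_sets[of "Suc k"])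
    fix \<omega> \<omega>' assume ag: "samples_agree J T (Suc k) \<omega> \<omega>'"
    show "(m \<le> k \<longrightarrow> A k \<omega> \<longrightarrow> \<not> Bn k \<omega>) \<longleftrightarrow> (m \<le> k \<longrightarrow> A k \<omega>' \<longrightarrow> \<not> Bn k \<omega>')"
    proof (cases "m \<le> k")
      case True
      then have k: "1 \<le> k" using m by simp
      have "samples_agree J T k \<omega> \<omega>'" using ag by (auto intro: samples_agree_mono)
      then show ?thesis using hA[OF k] hB[OF k ag] by auto
    qed simp
  qed
  have cnt_meas: "{\<omega>\<in>space PS. N \<le> cnt m K \<omega>} \<in> P.events" if m: "1 \<le> m" for m N K
  proof (rule det_sets[of K])
    fix \<omega> \<omega>' assume "samples_agree J T K \<omega> \<omega>'"
    then show "N \<le> cnt m K \<omega> \<longleftrightarrow> N \<le> cnt m K \<omega>'" using det_okcnt[OF m] by auto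
  qed
  have tail_meas: "{\<omega>\<in>space PS. okA m K \<omega> \<and> N \<le> cnt m K \<omega>} \<in> P.events" if m: "1 \<le> m" for m N K
  proof (rule det_sets[of K])
    fix \<omega> \<omega>' assume "samples_agree J T K \<omega> \<omega>'"
    then show "(okA m K \<omega> \<and> N \<le> cnt m K \<omega>) \<longleftrightarrow> (okA m K \<omega>' \<and> N \<le> cnt m K \<omega>')" using det_okcnt[OF m] by auto
  qed
  have Nm_le: "P.prob (Nm m) \<le> qq^N" if m: "1 \<le> m" for m N
  proof -
    define G where "G K = {\<omega>\<in>space PS. (\<forall>k. m \<le> k \<longrightarrow> A k \<omega> \<longrightarrow> \<not> Bn k \<omega>) \<and> N \<le> cnt m K \<omega>}" for K
    have Gm: "G K \<in> P.events" for K
      unfolding G_def by (intro sets.sets_Collect_conj sets.sets_Collect_countable_All base_meas cnt_meas m)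
    have inc: "incseq G"
      unfolding incseq_def G_def using cnt_mono by (auto intro: order_trans)
    have Gle: "P.prob (G K) \<le> qq^N" for K
    proof -
      have "G K \<subseteq> {\<omega>\<in>space PS. okA m (max K m) \<omega> \<and> N \<le> cnt m (max K m) \<omega>}"
        unfolding G_def okA_def using cnt_mono[of K "max K m" m] by (auto intro: order_trans)
      then have "P.prob (G K) \<le> P.prob {\<omega>\<in>space PS. okA m (max K m) \<omega> \<and> N \<le> cnt m (max K m) \<omega>}"
        by (intro P.finite_measure_mono tail_meas m)
      also have "\<dots> \<le> qq^N" by (rule tail[OF m]) simp
      finally show ?thesis .
    qed
    have lim: "(\<lambda>K. P.prob (G K)) \<longlonglongrightarrow> P.prob (\<Union>(range G))"
      by (rule P.finite_Lim_measure_incseq) (use Gm inc in auto)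
    have "P.prob (\<Union>(range G)) \<le> qq^N"
      by (rule LIMSEQ_le_const2[OF lim]) (use Gle in auto)
    moreover have "Nm m \<subseteq> \<Union>(range G)" unfolding Nm_def G_def by blast
    moreover have "\<Union>(range G) \<in> P.events" using Gm by auto
    ultimately show ?thesis using P.finite_measure_mono by (meson order_trans)
  qed
  have Nm_null: "Nm (Suc m) \<in> null_sets PS" for m
  proof -
    have m: "1 \<le> Suc m" by simp
    have meas: "Nm (Suc m) \<in> P.events"
      unfolding Nm_def by (intro sets.sets_Collect_conj sets.sets_Collect_countable_All
          sets.sets_Collect_countable_Ex base_meas cnt_meas m)
    have "(\<lambda>N. qq^N) \<longlonglongrightarrow> 0" using qq by (intro LIMSEQ_power_zero) simp
    then have "P.prob (Nm (Suc m)) \<le> 0"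
      by (rule LIMSEQ_le_const) (use Nm_le[OF m] in auto)
    then have "P.prob (Nm (Suc m)) = 0" using measure_nonneg[of PS "Nm (Suc m)"] by linarith
    then have "emeasure PS (Nm (Suc m)) = 0" by (simp add: P.emeasure_eq_measure)
    then show ?thesis using meas by (rule null_setsI)
  qed
  have sub: "{\<omega>\<in>space PS. \<not> ((\<exists>\<^sub>\<infinity>k. A k \<omega>) \<longrightarrow> (\<exists>\<^sub>\<infinity>k. 1 \<le> k \<and> A k \<omega> \<and> Bn k \<omega>))}
      \<subseteq> (\<Union>m. Nm (Suc m))"
  proof
    fix \<omega> assume "\<omega> \<in> {\<omega>\<in>space PS. \<not> ((\<exists>\<^sub>\<infinity>k. A k \<omega>) \<longrightarrow> (\<exists>\<^sub>\<infinity>k. 1 \<le> k \<and> A k \<omega> \<and> Bn k \<omega>))}"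
    then have sp: "\<omega> \<in> space PS" and inf: "\<exists>\<^sub>\<infinity>k. A k \<omega>" and ninf: "\<not> (\<exists>\<^sub>\<infinity>k. 1 \<le> k \<and> A k \<omega> \<and> Bn k \<omega>)"
      by auto
    obtain m0 where m0: "\<forall>k>m0. \<not> (1 \<le> k \<and> A k \<omega> \<and> Bn k \<omega>)"
      using ninf unfolding not_INFM MOST_nat by blast
    have p1: "\<forall>k. Suc m0 \<le> k \<longrightarrow> A k \<omega> \<longrightarrow> \<not> Bn k \<omega>" using m0 by auto
    have p2: "\<exists>K. N \<le> cnt (Suc m0) K \<omega>" for N
    proof -
      define S where "S = {k. Suc m0 \<le> k \<and> A k \<omega>}"
      have "infinite {k. A k \<omega>}" using inf unfolding INFM_iff_infinite .
      moreover have "{k. A k \<omega>} \<subseteq> S \<union> {..<Suc m0}" unfolding S_def by auto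
      ultimately have "infinite S" using finite_subset by blast
      then obtain Bs where Bs: "finite Bs" "card Bs = N" "Bs \<subseteq> S" using infinite_arbitrarily_large by blast
      define K where "K = Suc (Max (insert (Suc m0) Bs))"
      have "Bs \<subseteq> {k\<in>{Suc m0..<K}. A k \<omega>}"
      proof
        fix b assume b: "b \<in> Bs"
        have "b \<le> Max (insert (Suc m0) Bs)" using Bs(1) b by (intro Max_ge) auto
        then show "b \<in> {k\<in>{Suc m0..<K}. A k \<omega>}" using b Bs(3) unfolding K_def S_def by auto
      qed
      then have "card Bs \<le> cnt (Suc m0) K \<omega>" unfolding cnt_def by (intro card_mono) auto
      then show ?thesis using Bs(2) by blast
    qed
    have "\<omega> \<in> Nm (Suc m0)" unfolding Nm_def using sp p1 p2 by blast
    then show "\<omega> \<in> (\<Union>m. Nm (Suc m))" by blast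
  qed
  show ?thesis by (rule AE_I'[OF null_sets_UN[OF Nm_null] sub])
qed

end
end



context S6 begin

definition "Ev c a b k \<omega> \<longleftrightarrow> x k n \<omega> \<in> ball c (1 / real (Suc a)) \<and>
   ereal (1 / real (Suc b)) \<le> Q t (x k n \<omega>) - Qk (k-1) t \<omega> (x k n \<omega>)"

lemma Ev_det: "1 \<le> k \<Longrightarrow> samples_agree J T k \<omega> \<omega>' \<Longrightarrow> (Ev c a b k \<omega> \<longleftrightarrow> Ev c a b k \<omega>')"
proof -
  assume k: "1 \<le> k" and ag: "samples_agree J T k \<omega> \<omega>'"
  have "x k n \<omega> = x k n \<omega>'" using x_adapted k ag by blast
  moreover have "Qk (k-1) t \<omega> = Qk (k-1) t \<omega>'"
    using Qk_adapt[of "k-1" \<omega> \<omega>' t] ag k t_range by auto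
  ultimately show ?thesis unfolding Ev_def by simp
qed

lemma cutf_real: "1 \<le> k \<Longrightarrow> \<exists>r. th k t \<omega> = ereal r \<and> (\<forall>y. cutf k t \<omega> y = ereal (r + bet k t \<omega> \<bullet> (y - xn k t \<omega>)))"
  using th_fin[of k t \<omega>] t_range unfolding cutf_def by auto

lemma Qk_fin:
  assumes k: "1 \<le> k" and y: "Q t y = ereal v"
  shows "\<exists>r. Qk k t \<omega> y = ereal r \<and> r \<le> v"
proof -
  obtain r0 where r0: "\<forall>y. cutf k t \<omega> y = ereal (r0 + bet k t \<omega> \<bullet> (y - xn k t \<omega>))"
    using cutf_real[OF k] by blast
  have "cutf k t \<omega> y \<le> Qk k t \<omega> y" using bw_eq[OF k, of t \<omega> y] t_range by simp
  moreover have "Qk k t \<omega> y \<le> ereal v" using valid[of t k \<omega> y] t_range y by simp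
  ultimately show ?thesis using r0 by (cases "Qk k t \<omega> y") auto
qed

lemma det_main:
  assumes g: "good0 \<omega>"
    and lim: "((\<lambda>k. Q t (x k n \<omega>) - Qk k t \<omega> (x k n \<omega>)) \<longlongrightarrow> 0)
                   (sequentially \<sqinter> principal {k. 1 \<le> k \<and> sampled_node J k (t - 1) \<omega> = n})"
    and Dd: "\<And>U. open U \<Longrightarrow> U \<noteq> {} \<Longrightarrow> \<exists>d\<in>D. d \<in> U"
    and bc: "\<And>c a b. c \<in> D \<Longrightarrow> (\<exists>\<^sub>\<infinity>k. Ev c a b k \<omega>) \<Longrightarrow> (\<exists>\<^sub>\<infinity>k. 1 \<le> k \<and> Ev c a b k \<omega> \<and> Bn k \<omega>)"
  shows "((\<lambda>k. Q t (x k n \<omega>) - Qk k t \<omega> (x k n \<omega>)) \<longlongrightarrow> 0)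
                   (sequentially \<sqinter> principal {k. 1 \<le> k \<and> sampled_node J k (t - 1) \<omega> \<noteq> n})"
proof -
  define X where "X = Xs (t-1)"
  define y where "y k = x k n \<omega>" for k
  obtain e0 U where e0: "e0 > 0" "\<forall>y\<in>fatten X e0. Q t y = ereal (qt y) \<and> qt y \<le> U"
    and uc: "uniformly_continuous_on X qt" using stage_t2 unfolding X_def by blast
  have QX: "Q t z = ereal (qt z)" if "z \<in> X" for z
    using e0 that fatten_self[of e0 X] by auto
  obtain L0 where L0: "\<forall>k\<ge>1. norm (bet k t \<omega>) \<le> L0" using slope_bound[OF g] by blast
  define L where "L = max L0 0"
  have L: "\<forall>k\<ge>1. norm (bet k t \<omega>) \<le> L" "0 \<le> L" using L0 unfolding L_def by auto
  have yX: "y k \<in> X" if "1 \<le> k" for k using xnode_in[OF that] unfolding X_def y_def .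
  define gr where "gr k = qt (y k) - real_of_ereal (Qk k t \<omega> (y k))" for k
  have Gk: "Q t (y k) - Qk k t \<omega> (y k) = ereal (gr k)" and gr0: "0 \<le> gr k"
    and Qkr: "Qk k t \<omega> (y k) = ereal (qt (y k) - gr k)" if k: "1 \<le> k" for k
  proof -
    obtain r where r: "Qk k t \<omega> (y k) = ereal r" "r \<le> qt (y k)" using Qk_fin[OF k QX[OF yX[OF k]]] by blast
    show "Q t (y k) - Qk k t \<omega> (y k) = ereal (gr k)" "0 \<le> gr k" "Qk k t \<omega> (y k) = ereal (qt (y k) - gr k)"
      using r QX[OF yX[OF k]] unfolding gr_def by auto
  qed
  have conv: "((\<lambda>k. Q t (x k n \<omega>) - Qk k t \<omega> (x k n \<omega>)) \<longlongrightarrow> 0) (sequentially \<sqinter> principal S)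
       \<longleftrightarrow> (gr \<longlongrightarrow> 0) (sequentially \<sqinter> principal S)" if S: "S \<subseteq> {k. 1 \<le> k}" for S
  proof -
    have "\<forall>\<^sub>F k in sequentially \<sqinter> principal S. Q t (x k n \<omega>) - Qk k t \<omega> (x k n \<omega>) = ereal (gr k)"
      unfolding eventually_inf_principal using Gk S unfolding y_def by (auto intro!: always_eventually)
    then have "((\<lambda>k. Q t (x k n \<omega>) - Qk k t \<omega> (x k n \<omega>)) \<longlongrightarrow> ereal 0) (sequentially \<sqinter> principal S)
       \<longleftrightarrow> ((\<lambda>k. ereal (gr k)) \<longlongrightarrow> ereal 0) (sequentially \<sqinter> principal S)"
      by (rule tendsto_cong)
    then show ?thesis by (simp add: zero_ereal_def lim_ereal)
  qed
  have limr: "(gr \<longlongrightarrow> 0) (sequentially \<sqinter> principal {k. 1 \<le> k \<and> sampled_node J k (t - 1) \<omega> = n})"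
    using lim conv[of "{k. 1 \<le> k \<and> sampled_node J k (t - 1) \<omega> = n}"] by auto
  have "(gr \<longlongrightarrow> 0) (sequentially \<sqinter> principal {k. 1 \<le> k \<and> sampled_node J k (t - 1) \<omega> \<noteq> n})"
  proof (rule tendstoI, rule ccontr)
    fix e :: real assume e: "e > 0"
    define S' where "S' = {k. 1 \<le> k \<and> sampled_node J k (t - 1) \<omega> \<noteq> n}"
    assume "\<not> (\<forall>\<^sub>F k in sequentially \<sqinter> principal {k. 1 \<le> k \<and> sampled_node J k (t - 1) \<omega> \<noteq> n}. dist (gr k) 0 < e)"
    then have "\<exists>\<^sub>F k in sequentially. \<not> (k \<in> S' \<longrightarrow> dist (gr k) 0 < e)"
      unfolding eventually_inf_principal S'_def not_eventually by simp
    then have fr0: "\<forall>m. \<exists>k\<ge>m. k \<in> S' \<and> e \<le> \<bar>gr k\<bar>"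
      unfolding frequently_sequentially by (auto simp: not_less)
    have fr: "\<forall>m. \<exists>k\<ge>m. k \<in> S' \<and> e \<le> gr k"
    proof
      fix m obtain k where "k \<ge> m" "k \<in> S'" "e \<le> \<bar>gr k\<bar>" using fr0 by blast
      moreover then have "0 \<le> gr k" using gr0 unfolding S'_def by auto
      ultimately show "\<exists>k\<ge>m. k \<in> S' \<and> e \<le> gr k" by auto
    qed
    define Bd where "Bd = {k. k \<in> S' \<and> e \<le> gr k}"
    have infBd: "infinite Bd" unfolding Bd_def infinite_nat_iff_unbounded_le using fr by blast
    obtain b where b: "inverse (real (Suc b)) < e" using reals_Archimedean[OF e] by blast
    define e' where "e' = 1 / real (Suc b)"
    have e': "0 < e'" "e' < e" using b unfolding e'_def by (auto simp: inverse_eq_divide)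
    have e3: "e'/3 > 0" using e' by simp
    obtain \<delta> where \<delta>: "\<delta> > 0" "\<forall>z1\<in>X. \<forall>z2\<in>X. dist z2 z1 < \<delta> \<longrightarrow> dist (qt z2) (qt z1) < e'/3"
      using uc[unfolded uniformly_continuous_on_def, rule_format, OF e3] by blast
    have pos: "0 < min (\<delta>/2) (e' / (6 * (L + 1)))" using \<delta> e' L by auto
    obtain a where a: "inverse (real (Suc a)) < min (\<delta>/2) (e' / (6 * (L + 1)))"
      using reals_Archimedean[OF pos] by blast
    define r where "r = 1 / real (Suc a)"
    have r: "0 < r" "r < \<delta>/2" "r < e' / (6 * (L + 1))" using a unfolding r_def by (auto simp: inverse_eq_divide)
    have cover: "X \<subseteq> \<Union> ((\<lambda>c. ball c r) ` D)"
    proof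
      fix z assume "z \<in> X"
      obtain d where "d \<in> D" "d \<in> ball z r" using Dd[of "ball z r"] r by auto
      then show "z \<in> \<Union> ((\<lambda>c. ball c r) ` D)" by (auto simp: dist_commute)
    qed
    have cX: "compact X" using Xt1 unfolding X_def by auto
    obtain C' where C': "C' \<subseteq> D" "finite C'" "X \<subseteq> \<Union> ((\<lambda>c. ball c r) ` C')"
      using compactE_image[OF cX _ cover] by blast
    have "Bd \<subseteq> (\<Union>c\<in>C'. {k\<in>Bd. y k \<in> ball c r})"
    proof
      fix k assume k: "k \<in> Bd"
      then have "1 \<le> k" unfolding Bd_def S'_def by auto
      then have "y k \<in> X" by (rule yX)
      then obtain c where "c \<in> C'" "y k \<in> ball c r" using C'(3) by blast
      then show "k \<in> (\<Union>c\<in>C'. {k\<in>Bd. y k \<in> ball c r})" using k by blast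
    qed
    then have "infinite (\<Union>c\<in>C'. {k\<in>Bd. y k \<in> ball c r})" using infBd finite_subset by blast
    then obtain c where c: "c \<in> C'" "infinite {k\<in>Bd. y k \<in> ball c r}" using C'(2) by auto
    have cD: "c \<in> D" using c C' by auto
    have Ev_bad: "Ev c a b k \<omega>" if k: "k \<in> {k\<in>Bd. y k \<in> ball c r}" for k
    proof -
      have k1: "1 \<le> k" and ke: "e \<le> gr k" and kb: "y k \<in> ball c r" using k unfolding Bd_def S'_def by auto
      have "ereal e' \<le> ereal (gr k)" using ke e' by simp
      also have "\<dots> = Q t (y k) - Qk k t \<omega> (y k)" using Gk[OF k1] by simp
      also have "\<dots> \<le> Q t (y k) - Qk (k-1) t \<omega> (y k)"
        using Qk_mono[of t "k-1" k \<omega> "y k"] t_range by (intro ereal_minus_mono) auto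
      finally show ?thesis using kb unfolding Ev_def y_def e'_def r_def by simp
    qed
    have "{k\<in>Bd. y k \<in> ball c r} \<subseteq> {k. Ev c a b k \<omega>}" using Ev_bad by blast
    then have "infinite {k. Ev c a b k \<omega>}" using c(2) finite_subset by blast
    then have "\<exists>\<^sub>\<infinity>k. Ev c a b k \<omega>" unfolding INFM_iff_infinite .
    then have infA: "\<exists>\<^sub>\<infinity>k. 1 \<le> k \<and> Ev c a b k \<omega> \<and> Bn k \<omega>" by (rule bc[OF cD])
    have "e'/3 > 0" using e' by simp
    then have "\<forall>\<^sub>F k in sequentially \<sqinter> principal {k. 1 \<le> k \<and> sampled_node J k (t - 1) \<omega> = n}. dist (gr k) 0 < e'/3"
      using limr tendstoD by blast
    then obtain K0 where K0: "\<forall>k\<ge>K0. (1 \<le> k \<and> sampled_node J k (t - 1) \<omega> = n) \<longrightarrow> \<bar>gr k\<bar> < e'/3"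
      unfolding eventually_inf_principal eventually_sequentially by auto
    obtain k1 where k1: "k1 \<ge> K0" "1 \<le> k1" "Ev c a b k1 \<omega>" "Bn k1 \<omega>"
      using infA unfolding INFM_nat_le by blast
    obtain k2 where k2: "k2 \<ge> k1" "k2 \<in> {k\<in>Bd. y k \<in> ball c r}"
      using c(2) unfolding infinite_nat_iff_unbounded_le by blast
    have k2': "1 \<le> k2" "e \<le> gr k2" "y k2 \<in> ball c r" using k2 unfolding Bd_def S'_def by auto
    define y1 where "y1 = y k1"
    define y2 where "y2 = y k2"
    have y1X: "y1 \<in> X" and y2X: "y2 \<in> X" unfolding y1_def y2_def using yX k1(2) k2'(1) by auto
    have y1b: "y1 \<in> ball c r" using k1(3) unfolding Ev_def y1_def y_def r_def by simp
    have dy: "dist y1 y2 < 2 * r"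
    proof -
      have "dist c y1 < r" "dist c y2 < r" using y1b k2'(3) unfolding y2_def by auto
      moreover have "dist y1 y2 \<le> dist y1 c + dist y2 c" by (rule dist_triangle2)
      ultimately show ?thesis by (simp add: dist_commute)
    qed
    have gr1: "gr k1 < e'/3" using K0 k1 unfolding Bn_def by auto
    have A1: "ereal e' \<le> Q t y1 - Qk (k1-1) t \<omega> y1" using k1(3) unfolding Ev_def y1_def y_def e'_def by simp
    have prev: "Qk (k1-1) t \<omega> y1 \<le> ereal (qt y1 - e')"
    proof (cases "Qk (k1-1) t \<omega> y1")
      case (real v) then show ?thesis using A1 QX[OF y1X] by simp
    next
      case PInf then show ?thesis using A1 QX[OF y1X] by simp
    next
      case MInf then show ?thesis by simp
    qed
    obtain r1 where r1: "th k1 t \<omega> = ereal r1" "\<forall>z. cutf k1 t \<omega> z = ereal (r1 + bet k1 t \<omega> \<bullet> (z - xn k1 t \<omega>))"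
      using cutf_real[OF k1(2)] by blast
    have Qk1: "Qk k1 t \<omega> y1 = ereal (qt y1 - gr k1)" using Qkr[OF k1(2)] unfolding y1_def .
    have "Qk k1 t \<omega> y1 = max (Qk (k1-1) t \<omega> y1) (cutf k1 t \<omega> y1)" using bw_eq[OF k1(2)] t_range by simp
    moreover have "Qk (k1-1) t \<omega> y1 < Qk k1 t \<omega> y1" using prev Qk1 gr1 e' by (auto intro: le_less_trans)
    ultimately have "Qk k1 t \<omega> y1 = cutf k1 t \<omega> y1" by (auto simp: max_def split: if_splits)
    then have c1: "r1 + bet k1 t \<omega> \<bullet> (y1 - xn k1 t \<omega>) = qt y1 - gr k1" using Qk1 r1 by simp
    have "bet k1 t \<omega> \<bullet> (y2 - y1) \<ge> - (L * (2 * r))"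
    proof -
      have "\<bar>bet k1 t \<omega> \<bullet> (y2 - y1)\<bar> \<le> norm (bet k1 t \<omega>) * norm (y2 - y1)" by (rule Cauchy_Schwarz_ineq2)
      also have "\<dots> \<le> L * (2 * r)"
        using L k1(2) dy by (intro mult_mono) (auto simp: dist_norm norm_minus_commute)
      finally show ?thesis by simp
    qed
    moreover have "L * (2 * r) \<le> e'/3"
    proof -
      have "L * (2 * r) \<le> (L + 1) * (2 * r)" using r by simp
      also have "\<dots> \<le> (L + 1) * (2 * (e' / (6 * (L + 1))))" using r L by (intro mult_left_mono) auto
      also have "\<dots> = e'/3" using L by (simp add: field_simps)
      finally show ?thesis .
    qed
    ultimately have c2: "r1 + bet k1 t \<omega> \<bullet> (y2 - xn k1 t \<omega>) \<ge> qt y1 - gr k1 - e'/3"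
      using c1 by (simp add: inner_diff_right algebra_simps)
    have "ereal (r1 + bet k1 t \<omega> \<bullet> (y2 - xn k1 t \<omega>)) = cutf k1 t \<omega> y2" using r1 by simp
    also have "\<dots> \<le> Qk k1 t \<omega> y2" using bw_eq[OF k1(2)] t_range by simp
    also have "\<dots> \<le> Qk k2 t \<omega> y2" using Qk_mono[of t k1 k2 \<omega> y2] t_range k2(1) by simp
    also have "\<dots> = ereal (qt y2 - gr k2)" using Qkr[OF k2'(1)] unfolding y2_def .
    finally have c3: "r1 + bet k1 t \<omega> \<bullet> (y2 - xn k1 t \<omega>) \<le> qt y2 - gr k2" by simp
    have "dist (qt y2) (qt y1) < e'/3" using \<delta>(2) y1X y2X dy r by (auto simp: dist_commute)
    then have "\<bar>qt y2 - qt y1\<bar> < e'/3" by (simp add: dist_real_def)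
    then have "qt y2 < qt y1 + e'/3" by linarith
    then have "gr k2 < e'" using c2 c3 gr1 by linarith
    then show False using k2'(2) e' by linarith
  qed
  then show ?thesis using conv[of "{k. 1 \<le> k \<and> sampled_node J k (t - 1) \<omega> \<noteq> n}"] by auto
qed

end



context S6 begin

lemma AE_J: assumes k: "1 \<le> k" and r: "r \<in> {2..T}" shows "AE \<omega> in PS. J k r \<omega> < M"
proof -
  have meas: "J k r -` {j} \<inter> space PS \<in> P.events" for j
  proof -
    have "J k r \<in> measurable PS (count_space UNIV)" using J_meas k r by blast
    then show ?thesis by (simp add: measurable_sets)
  qed
  have eq: "{\<omega>\<in>space PS. J k r \<omega> < M} = (\<Union>j\<in>{..<M}. J k r -` {j} \<inter> space PS)" by auto
  have "P.prob (\<Union>j\<in>{..<M}. J k r -` {j} \<inter> space PS) = (\<Sum>j\<in>{..<M}. P.prob (J k r -` {j} \<inter> space PS))"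
    by (rule P.finite_measure_finite_Union) (auto simp: meas disjoint_family_on_def)
  also have "\<dots> = (\<Sum>j<M. p r j)"
  proof (rule sum.cong)
    fix j assume "j \<in> {..<M}"
    moreover have "J k r -` {j} \<inter> space PS = {\<omega> \<in> space PS. J k r \<omega> = j}" by auto
    ultimately show "P.prob (J k r -` {j} \<inter> space PS) = p r j" using J_dist k r by auto
  qed simp
  also have "\<dots> = 1" using p_sum r by blast
  finally have "P.prob {\<omega>\<in>space PS. J k r \<omega> < M} = 1" using eq by simp
  then have "AE \<omega> in PS. \<omega> \<in> {\<omega>\<in>space PS. J k r \<omega> < M}" by (rule prob_space.AE_prob_1[OF PS])
  then show ?thesis by auto
qed

lemma AE_good0: "AE \<omega> in PS. good0 \<omega>"
proof -
  have "AE \<omega> in PS. \<forall>kr::nat\<times>nat. (1 \<le> fst kr \<and> snd kr \<in> {2..T}) \<longrightarrow> J (fst kr) (snd kr) \<omega> < M"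
  proof (subst AE_all_countable, intro allI)
    fix kr :: "nat \<times> nat"
    show "AE \<omega> in PS. (1 \<le> fst kr \<and> snd kr \<in> {2..T}) \<longrightarrow> J (fst kr) (snd kr) \<omega> < M"
    proof (cases "1 \<le> fst kr \<and> snd kr \<in> {2..T}")
      case True then show ?thesis using AE_J[of "fst kr" "snd kr"] by auto
    next
      case False then show ?thesis by (intro AE_I2) blast
    qed
  qed
  then show ?thesis unfolding good0_def by eventually_elim auto
qed

lemma main: "AE \<omega> in PS. ((\<lambda>k. Q t (x k n \<omega>) - Qk k t \<omega> (x k n \<omega>)) \<longlongrightarrow> 0)
                   (sequentially \<sqinter> principal {k. 1 \<le> k \<and> sampled_node J k (t - 1) \<omega> \<noteq> n})"
proof -
  obtain D :: "'a set" where D: "countable D" "\<forall>U. open U \<longrightarrow> U \<noteq> {} \<longrightarrow> (\<exists>d\<in>D. d \<in> U)"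
    using countable_dense_exists by blast
  have AEbc: "AE \<omega> in PS. \<forall>cab\<in>D \<times> (UNIV::nat set) \<times> (UNIV::nat set).
      (\<exists>\<^sub>\<infinity>k. Ev (fst cab) (fst (snd cab)) (snd (snd cab)) k \<omega>) \<longrightarrow>
      (\<exists>\<^sub>\<infinity>k. 1 \<le> k \<and> Ev (fst cab) (fst (snd cab)) (snd (snd cab)) k \<omega> \<and> Bn k \<omega>)"
  proof (subst AE_ball_countable)
    show "countable (D \<times> (UNIV::nat set) \<times> (UNIV::nat set))" using D(1) by auto
    show "\<forall>cab\<in>D \<times> (UNIV::nat set) \<times> (UNIV::nat set). AE \<omega> in PS.
      (\<exists>\<^sub>\<infinity>k. Ev (fst cab) (fst (snd cab)) (snd (snd cab)) k \<omega>) \<longrightarrow>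
      (\<exists>\<^sub>\<infinity>k. 1 \<le> k \<and> Ev (fst cab) (fst (snd cab)) (snd (snd cab)) k \<omega> \<and> Bn k \<omega>)"
    proof
      fix cab assume "cab \<in> D \<times> (UNIV::nat set) \<times> (UNIV::nat set)"
      show "AE \<omega> in PS.
        (\<exists>\<^sub>\<infinity>k. Ev (fst cab) (fst (snd cab)) (snd (snd cab)) k \<omega>) \<longrightarrow>
        (\<exists>\<^sub>\<infinity>k. 1 \<le> k \<and> Ev (fst cab) (fst (snd cab)) (snd (snd cab)) k \<omega> \<and> Bn k \<omega>)"
        by (rule BC) (rule Ev_det)
    qed
  qed
  show ?thesis
    using AE_good0 lim_in AEbc
  proof eventually_elim
    case (elim \<omega>)
    show ?case
    proof (rule det_main[of \<omega> D])
      show "good0 \<omega>" using elim by simp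
      show "((\<lambda>k. Q t (x k n \<omega>) - Qk k t \<omega> (x k n \<omega>)) \<longlongrightarrow> 0)
                   (sequentially \<sqinter> principal {k. 1 \<le> k \<and> sampled_node J k (t - 1) \<omega> = n})"
        using elim by simp
      show "\<exists>d\<in>D. d \<in> U" if "open U" "U \<noteq> {}" for U using D(2) that by blast
      show "\<exists>\<^sub>\<infinity>k. 1 \<le> k \<and> Ev c a b k \<omega> \<and> Bn k \<omega>" if "c \<in> D" "\<exists>\<^sub>\<infinity>k. Ev c a b k \<omega>" for c a b
      proof -
        have "(c, a, b) \<in> D \<times> (UNIV::nat set) \<times> (UNIV::nat set)" using that(1) by simp
        then have "(\<exists>\<^sub>\<infinity>k. Ev (fst (c,a,b)) (fst (snd (c,a,b))) (snd (snd (c,a,b))) k \<omega>) \<longrightarrow>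
          (\<exists>\<^sub>\<infinity>k. 1 \<le> k \<and> Ev (fst (c,a,b)) (fst (snd (c,a,b))) (snd (snd (c,a,b))) k \<omega> \<and> Bn k \<omega>)"
          by (rule bspec[OF elim(3)])
        then show ?thesis using that(2) by simp
      qed
    qed
  qed
qed

end

theorem mainTheorem6:
  fixes T M :: nat
    and x0 :: "'a::euclidean_space"
    and Xs :: "nat \<Rightarrow> 'a set"
    and xi1 :: "'xi::euclidean_space"
    and xi :: "nat \<Rightarrow> nat \<Rightarrow> 'xi"
    and p :: "nat \<Rightarrow> nat \<Rightarrow> real"
    and f :: "nat \<Rightarrow> 'a \<Rightarrow> 'a \<Rightarrow> 'xi \<Rightarrow> ereal"
    and g :: "nat \<Rightarrow> nat \<Rightarrow> 'a \<Rightarrow> 'a \<Rightarrow> 'xi \<Rightarrow> real"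
    and ng nr :: "nat \<Rightarrow> nat"
    and Ar Br :: "nat \<Rightarrow> nat \<Rightarrow> 'xi \<Rightarrow> 'a"
    and bv :: "nat \<Rightarrow> nat \<Rightarrow> 'xi \<Rightarrow> real"
    and Xf :: "nat \<Rightarrow> 'a \<Rightarrow> 'xi \<Rightarrow> 'a set"
    and Q Q0 :: "nat \<Rightarrow> 'a \<Rightarrow> ereal"
    and lam :: "nat \<Rightarrow> nat \<Rightarrow> real"
    and PS :: "'w measure"
    and J :: "nat \<Rightarrow> nat \<Rightarrow> 'w \<Rightarrow> nat"
    and xP :: "nat \<Rightarrow> nat \<Rightarrow> 'w \<Rightarrow> 'a"
    and x :: "nat \<Rightarrow> nat list \<Rightarrow> 'w \<Rightarrow> 'a"
    and Qk :: "nat \<Rightarrow> nat \<Rightarrow> 'w \<Rightarrow> 'a \<Rightarrow> ereal"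
    and pi :: "nat \<Rightarrow> nat \<Rightarrow> nat \<Rightarrow> 'w \<Rightarrow> 'a"
    and t :: nat and n :: "nat list"
  \<comment> \<open>(H1): finite supports, probabilities of the realizations\<close>
  assumes p_pos: "\<forall>s\<in>{2..T}. \<forall>j<M. p s j > 0"
    and p_sum: "\<forall>s\<in>{2..T}. (\<Sum>j<M. p s j) = 1"
    and xi_distinct: "\<forall>s\<in>{2..T}. inj_on (xi s) {..<M}"
  \<comment> \<open>the entries of (b_t, A_t, B_t) are components of xi_t\<close>
    and A_comp: "\<forall>s\<in>{1..T}. \<forall>i<nr s. \<forall>e\<in>Basis. \<exists>l\<in>Basis. \<forall>\<xi>. Ar s i \<xi> \<bullet> e = \<xi> \<bullet> l"
    and B_comp: "\<forall>s\<in>{1..T}. \<forall>i<nr s. \<forall>e\<in>Basis. \<exists>l\<in>Basis. \<forall>\<xi>. Br s i \<xi> \<bullet> e = \<xi> \<bullet> l"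
    and b_comp: "\<forall>s\<in>{1..T}. \<forall>i<nr s. \<exists>l\<in>Basis. \<forall>\<xi>. bv s i \<xi> = \<xi> \<bullet> l"
    and Xf_def: "Xf = feas Xs g ng Ar Br bv nr"
    and X0: "Xs 0 = {x0}"
  \<comment> \<open>(H2)\<close>
    and H2_1: "\<forall>s\<in>{1..T}. Xs s \<noteq> {} \<and> convex (Xs s) \<and> compact (Xs s)"
    and H2_2a: "\<forall>s\<in>{1..T}. \<forall>y z. (\<lambda>\<xi>. f s y z \<xi>) \<in> borel_measurable borel"
    and H2_2b: "\<forall>s\<in>{1..T}. \<forall>\<xi>\<in>Theta xi1 xi M s.
          proper_ef (\<lambda>(y, z). f s y z \<xi>) \<and> convex_ef (\<lambda>(y, z). f s y z \<xi>)
          \<and> lsc_ef (\<lambda>(y, z). f s y z \<xi>)"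
    and H2_3: "\<forall>s\<in>{1..T}. \<forall>\<xi>\<in>Theta xi1 xi M s. \<forall>i<ng s.
          convex_on UNIV (\<lambda>(y, z). g s i y z \<xi>) \<and> lsc_ef (\<lambda>(y, z). ereal (g s i y z \<xi>))"
    and H2_4: "\<forall>s\<in>{1..T}. \<exists>\<epsilon>>0. \<forall>\<xi>\<in>Theta xi1 xi M s.
          fatten (Xs (s - 1)) \<epsilon> \<times> Xs s \<subseteq> edom (\<lambda>(y, z). f s y z \<xi>)
          \<and> (\<forall>y\<in>fatten (Xs (s - 1)) \<epsilon>. Xf s y \<xi> \<noteq> {})"
    and H2_5: "\<forall>s\<in>{2..T}. \<forall>\<xi>\<in>Theta xi1 xi M s. \<exists>yb xb.
          (yb, xb) \<in> (Xs (s - 1) \<times> rel_interior (Xs s))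
                      \<inter> rel_interior {(y, z). \<forall>i<ng s. g s i y z \<xi> \<le> 0}
          \<and> xb \<in> Xf s yb \<xi>"
  \<comment> \<open>cost-to-go functions\<close>
    and Q_last: "\<forall>y. Q (Suc T) y = 0"
    and Q_rec: "\<forall>s\<in>{2..T}. \<forall>y. Q s y = (\<Sum>j<M. ereal (p s j) * Qinf f Xf (Q (Suc s)) s y (xi s j))"
  \<comment> \<open>SREDA parameters\<close>
    and lam_nonneg: "\<forall>s k. lam s k \<ge> 0"
    and lam_first: "\<forall>s. lam s 1 = 0"
    and lam_last: "\<forall>k. lam T k = 0"
    and lam_lim: "\<forall>s\<in>{1..<T}. (lam s \<longlonglongrightarrow> 0)"
    and prox_in: "\<forall>s\<in>{1..T}. \<forall>k\<ge>1. \<forall>\<omega>. xP s k \<omega> \<in> Xs s"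
    and Q_init: "\<forall>s\<in>{2..T}. \<forall>\<omega>. Qk 0 s \<omega> = Q0 s"
    and Q0_le: "\<forall>s\<in>{2..T}. \<forall>y. Q0 s y \<le> Q s y"
    and Qk_last: "\<forall>k \<omega>. Qk k (Suc T) \<omega> = (\<lambda>_. 0)"
  \<comment> \<open>(H3): sampling in the backward passes\<close>
    and PS: "prob_space PS"
    and J_meas: "\<forall>k\<ge>1. \<forall>s\<in>{2..T}. J k s \<in> measurable PS (count_space UNIV)"
    and J_dist: "\<forall>k\<ge>1. \<forall>s\<in>{2..T}. \<forall>j<M. measure PS {\<omega> \<in> space PS. J k s \<omega> = j} = p s j"
    and J_indep: "\<forall>k\<ge>1. \<forall>s\<in>{2..T}. prob_space.indep_set PS
          (sigma_sets (space PS) {J k s -` {j} \<inter> space PS | j. True})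
          (sigma_sets (space PS) {J k' s' -` {j} \<inter> space PS | j k' s'.
              (1 \<le> k' \<and> k' < k \<and> s' \<in> {2..T}) \<or> (k' = k \<and> s' \<in> {2..<s})})"
  \<comment> \<open>forward pass\<close>
    and forward: "\<forall>k\<ge>1. \<forall>\<omega>. \<forall>m. length m < T \<and> set m \<subseteq> {..<M} \<longrightarrow>
          (let s = length m + 1; \<xi> = node_xi xi1 xi m;
               xpar = (if m = [] then x0 else x k (butlast m) \<omega>)
           in is_arg_min
                (\<lambda>z. f s xpar z \<xi> + Qk (k - 1) (Suc s) \<omega> z
                      + ereal (lam s k * (norm (z - xP s k \<omega>))\<^sup>2))
                (\<lambda>z. z \<in> Xf s xpar \<xi>) (x k m \<omega>))"
  \<comment> \<open>backward pass\<close>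
    and backward: "\<forall>k\<ge>1. \<forall>\<omega>. \<forall>s\<in>{2..T}.
          (let xn = x k (sampled_node J k (s - 1) \<omega>) \<omega>
           in (\<forall>j<M. is_subgrad (\<lambda>z. Qinf f Xf (Qk k (Suc s) \<omega>) s z (xi s j)) xn (pi k s j \<omega>))
              \<and> Qk k s \<omega> = (\<lambda>y. max (Qk (k - 1) s \<omega> y)
                   ((\<Sum>j<M. ereal (p s j) * Qinf f Xf (Qk k (Suc s) \<omega>) s xn (xi s j))
                    + ereal ((\<Sum>j<M. p s j *\<^sub>R pi k s j \<omega>) \<bullet> (y - xn)))))"
  \<comment> \<open>the algorithm's choices are non-anticipative (deterministic rules applied to past samples)\<close>
    and x_adapted: "\<forall>k\<ge>1. \<forall>\<omega> \<omega>'. samples_agree J T k \<omega> \<omega>' \<longrightarrow>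
          (\<forall>m. x k m \<omega> = x k m \<omega>') \<and> (\<forall>s. xP s k \<omega> = xP s k \<omega>')"
    and pi_adapted: "\<forall>k\<ge>1. \<forall>\<omega> \<omega>'. samples_agree J T (Suc k) \<omega> \<omega>' \<longrightarrow>
          (\<forall>s j. pi k s j \<omega> = pi k s j \<omega>')"
  \<comment> \<open>the stage and node under consideration\<close>
    and t_range: "t \<in> {2..T}"
    and n_node: "n \<in> tree_nodes M (t - 1)"
    and lim_in: "AE \<omega> in PS. ((\<lambda>k. Q t (x k n \<omega>) - Qk k t \<omega> (x k n \<omega>)) \<longlongrightarrow> 0)
                   (sequentially \<sqinter> principal {k. 1 \<le> k \<and> sampled_node J k (t - 1) \<omega> = n})"
  shows "AE \<omega> in PS. ((\<lambda>k. Q t (x k n \<omega>) - Qk k t \<omega> (x k n \<omega>)) \<longlongrightarrow> 0)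
                   (sequentially \<sqinter> principal {k. 1 \<le> k \<and> sampled_node J k (t - 1) \<omega> \<noteq> n})"
  proof -
  interpret S6 T M x0 Xs xi1 xi p f g ng nr Ar Br bv Xf Q Q0 lam PS J xP x Qk pi t n
    by (intro S6.intro) (rule assms)+
  show ?thesis by (rule main)
qed

end
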